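(* Let $S=(Z_1,\dots,Z_n)$ consist of $n$ i.i.d. samples from a distribution $\mu$ on $\mathsf Z$, and let $P_{W|S}$ be any conditional distribution (learning algorithm) with values $W=(W_1,\dots,W_d)\in\mathcal B_1\times\cdots\times\mathcal B_d$. Then $$\mathrm{gen}(\mu,P_{W|S})\le\frac{LMR\sqrt2}{\sqrt n}\sum_{k=1}^d\beta_k\sqrt{I(S;W_1,\dots,W_k)},$$ where $I(S;W_1,\dots,W_k)$ is the mutual information under the joint distribution $\mu^{\otimes n}P_{W|S}$.
   Context: Let $d\ge2$, let $m,\delta_1,\dots,\delta_d$ be positive integers, $\delta_0=m$, $R>0$, $\mathcal X=\{x\in\mathbb R^m:|x|_2\le R\}$ ($|\cdot|_2$ Euclidean norm), $\mathcal Y$ a set and $\mathsf Z=\mathcal X\times\mathcal Y$. For $1\le j\le d$ fix $M_j\in\mathbb R^{\delta_j\times\delta_{j-1}}$ with $\|M_j\|_2>0$ (spectral norm) and $\alpha_j>0$, and let $\mathcal B_j=\{\mathbf W\in\mathbb R^{\delta_j\times\delta_{j-1}}:\|\mathbf W-M_j\|_2\le\alpha_j\|M_j\|_2\}$. Let $\phi$ be an activation (acting on vectors of every relevant dimension, e.g. entrywise ReLU) that is $1$-Lipschitz w.r.t. the Euclidean norm with $\phi(0)=0$, and $\phi_o$ either the identity or the soft-max on $\mathbb R^{\delta_d}$. For $w=(\mathbf W_1,\dots,\mathbf W_d)\in\mathcal B_1\times\cdots\times\mathcal B_d$ let $h_w(x)=\phi_o(\mathbf W_d\,\phi(\mathbf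 W_{d-1}\cdots\phi(\mathbf W_1x)\cdots))$. Let $M=\prod_{j=1}^d\|M_j\|_2$ and $\beta_k=\alpha_k\exp(\sum_{i=1}^{k-1}\alpha_i)$. Let $\ell:(\mathcal B_1\times\cdots\times\mathcal B_d)\times\mathsf Z\to[0,\infty)$ be a measurable loss for which there is $L>0$ with $|\ell(w,z)-\ell(w',z)|\le L|h_w(x)-h_{w'}(x)|_2$ for all $w,w'$ and all $z=(x,y)\in\mathsf Z$. Define $L_\mu(w)=\mathbb E[\ell(w,Z)]$ with $Z\sim\mu$, $L_S(w)=\frac1n\sum_{i=1}^n\ell(w,Z_i)$, and the expected generalization error $\mathrm{gen}(\mu,P_{W|S})=\mathbb E[L_\mu(W)-L_S(W)]$, the expectation being under the joint law $\mu^{\otimes n}P_{W|S}$ of $(S,W)$. *)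

theory Defs
  imports "HOL-Probability.Probability"
begin

text \<open>Finite-dimensional vectors and matrices of varying dimension are represented
uniformly: a vector of \<open>\<real>\<^sup>k\<close> is a function \<open>nat \<Rightarrow> real\<close> vanishing at indices \<open>\<ge> k\<close>,
an \<open>r \<times> c\<close> matrix is a function \<open>nat \<Rightarrow> nat \<Rightarrow> real\<close> vanishing outside \<open>{..<r} \<times> {..<c}\<close>.\<close>

definition vecs :: "nat \<Rightarrow> (nat \<Rightarrow> real) set" where
  "vecs k = {v. \<forall>i\<ge>k. v i = 0}"

definition mats :: "nat \<Rightarrow> nat \<Rightarrow> (nat \<Rightarrow> nat \<Rightarrow> real) set" where
  "mats r c = {A. \<forall>i j. (r \<le> i \<or> c \<le> j) \<longrightarrow> A i j = 0}"

definition vnorm :: "nat \<Rightarrow> (nat \<Rightarrow> real) \<Rightarrow> real" where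
  "vnorm k v = sqrt (\<Sum>i<k. (v i)\<^sup>2)"

definition mat_vec :: "nat \<Rightarrow> nat \<Rightarrow> (nat \<Rightarrow> nat \<Rightarrow> real) \<Rightarrow> (nat \<Rightarrow> real) \<Rightarrow> (nat \<Rightarrow> real)" where
  "mat_vec r c A v = (\<lambda>i. if i < r then (\<Sum>j<c. A i j * v j) else 0)"

definition spec_norm :: "nat \<Rightarrow> nat \<Rightarrow> (nat \<Rightarrow> nat \<Rightarrow> real) \<Rightarrow> real" where
  "spec_norm r c A = (SUP v \<in> {v \<in> vecs c. vnorm c v \<le> 1}. vnorm r (mat_vec r c A v))"

definition softmax :: "nat \<Rightarrow> (nat \<Rightarrow> real) \<Rightarrow> (nat \<Rightarrow> real)" where
  "softmax k v = (\<lambda>i. if i < k then exp (v i) / (\<Sum>j<k. exp (v j)) else 0)"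

text \<open>Hidden layers: \<open>layers \<delta> \<phi> w j x = \<phi>(W\<^sub>j \<phi>(\<dots> \<phi>(W\<^sub>1 x)))\<close>; \<open>\<phi> k\<close> is the activation
acting on \<open>\<real>\<^sup>k\<close>; \<open>\<delta> 0 = m\<close> is the input dimension, \<open>w j = W\<^sub>j\<close>.\<close>
fun layers :: "(nat \<Rightarrow> nat) \<Rightarrow> (nat \<Rightarrow> (nat \<Rightarrow> real) \<Rightarrow> (nat \<Rightarrow> real))
      \<Rightarrow> (nat \<Rightarrow> nat \<Rightarrow> nat \<Rightarrow> real) \<Rightarrow> nat \<Rightarrow> (nat \<Rightarrow> real) \<Rightarrow> (nat \<Rightarrow> real)" where
  "layers \<delta> \<phi> w 0 x = x"
| "layers \<delta> \<phi> w (Suc j) x =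
     \<phi> (\<delta> (Suc j)) (mat_vec (\<delta> (Suc j)) (\<delta> j) (w (Suc j)) (layers \<delta> \<phi> w j x))"

definition net :: "nat \<Rightarrow> (nat \<Rightarrow> nat) \<Rightarrow> (nat \<Rightarrow> (nat \<Rightarrow> real) \<Rightarrow> (nat \<Rightarrow> real))
      \<Rightarrow> ((nat \<Rightarrow> real) \<Rightarrow> (nat \<Rightarrow> real)) \<Rightarrow> (nat \<Rightarrow> nat \<Rightarrow> nat \<Rightarrow> real) \<Rightarrow> (nat \<Rightarrow> real) \<Rightarrow> (nat \<Rightarrow> real)" where
  "net d \<delta> \<phi> \<phi>o w x = \<phi>o (mat_vec (\<delta> d) (\<delta> (d - 1)) (w d) (layers \<delta> \<phi> w (d - 1) x))"

definition Bset :: "(nat \<Rightarrow> nat) \<Rightarrow> (nat \<Rightarrow> nat \<Rightarrow> nat \<Rightarrow> real) \<Rightarrow> (nat \<Rightarrow> real) \<Rightarrow> nat \<Rightarrow> (nat \<Rightarrow> nat \<Rightarrow> real) set" where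
  "Bset \<delta> M \<alpha> j = {W \<in> mats (\<delta> j) (\<delta> (j - 1)).
      spec_norm (\<delta> j) (\<delta> (j - 1)) (W - M j) \<le> \<alpha> j * spec_norm (\<delta> j) (\<delta> (j - 1)) (M j)}"

definition Xset :: "nat \<Rightarrow> real \<Rightarrow> (nat \<Rightarrow> real) set" where
  "Xset m R = {x \<in> vecs m. vnorm m x \<le> R}"

definition Wspace :: "(nat \<Rightarrow> nat) \<Rightarrow> (nat \<Rightarrow> nat \<Rightarrow> nat \<Rightarrow> real) \<Rightarrow> (nat \<Rightarrow> real) \<Rightarrow> nat
      \<Rightarrow> (nat \<Rightarrow> nat \<Rightarrow> nat \<Rightarrow> real) measure" where
  "Wspace \<delta> M \<alpha> k = (\<Pi>\<^sub>M j\<in>{1..k}. restrict_space borel (Bset \<delta> M \<alpha> j))"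

definition beta :: "(nat \<Rightarrow> real) \<Rightarrow> nat \<Rightarrow> real" where
  "beta \<alpha> k = \<alpha> k * exp (\<Sum>i\<in>{1..<k}. \<alpha> i)"

text \<open>Exactly in this case the library's real-valued
\<open>KL_divergence\<close> (and hence \<open>mutual_information\<close>) is the true (finite) value.\<close>
definition finite_KL :: "'a measure \<Rightarrow> 'a measure \<Rightarrow> bool" where
  "finite_KL M N \<longleftrightarrow> absolutely_continuous M N \<and> integrable N (entropy_density (exp 1) M N)"

end

theory Submission
  imports Defs
begin

lemma vnorm_L2: "vnorm k v = L2_set v {..<k}" by (simp add: vnorm_def L2_set_def)

lemma vnorm_nonneg[simp]: "0 \<le> vnorm k v" by (simp add: vnorm_def sum_nonneg)

lemma vnorm_add: "vnorm k (\<lambda>i. u i + v i) \<le> vnorm k u + vnorm k v"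
  unfolding vnorm_L2 by (rule L2_set_triangle_ineq)

lemma vnorm_cong: "(\<And>i. i < k \<Longrightarrow> u i = v i) \<Longrightarrow> vnorm k u = vnorm k v"
  unfolding vnorm_def by (intro arg_cong[where f=sqrt] sum.cong) auto

lemma vnorm_diff_commute: "vnorm k (u - v) = vnorm k (v - u)"
  unfolding vnorm_def by (intro arg_cong[where f=sqrt] sum.cong) (auto simp: power2_commute)

lemma vnorm_scale: "0 \<le> t \<Longrightarrow> vnorm k (\<lambda>i. t * v i) = t * vnorm k v"
  unfolding vnorm_L2 by (simp add: L2_set_right_distrib)

lemma vnorm_zero[simp]: "vnorm k (\<lambda>_. 0) = 0" by (simp add: vnorm_def)

lemma vnorm_eq_0: "vnorm k v = 0 \<Longrightarrow> i < k \<Longrightarrow> v i = 0"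
  unfolding vnorm_L2 by (subst (asm) L2_set_eq_0_iff) auto

lemma mat_vec_vecs: "mat_vec r c A v \<in> vecs r"
  by (simp add: mat_vec_def vecs_def)

lemma mat_vec_zero_vec[simp]: "mat_vec r c A (\<lambda>_. 0) = (\<lambda>_. 0)"
  by (simp add: mat_vec_def fun_eq_iff)

lemma mat_vec_zero_mat[simp]: "mat_vec r c (\<lambda>_ _. 0) v = (\<lambda>_. 0)"
  by (simp add: mat_vec_def fun_eq_iff)

lemma mat_vec_diff_mat: "mat_vec r c (A - B) v = mat_vec r c A v - mat_vec r c B v"
  by (auto simp: mat_vec_def fun_eq_iff algebra_simps sum_subtractf)

lemma mat_vec_add_mat: "mat_vec r c (\<lambda>i j. A i j + B i j) v = (\<lambda>i. mat_vec r c A v i + mat_vec r c B v i)"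
  by (auto simp: mat_vec_def fun_eq_iff algebra_simps sum.distrib)

lemma mat_vec_diff_vec: "mat_vec r c A (u - v) = mat_vec r c A u - mat_vec r c A v"
  by (auto simp: mat_vec_def fun_eq_iff algebra_simps sum_subtractf)

lemma mat_vec_scale: "mat_vec r c A (\<lambda>i. t * v i) = (\<lambda>i. t * mat_vec r c A v i)"
  by (auto simp: mat_vec_def fun_eq_iff algebra_simps sum_distrib_left)

lemma mat_vec_cong: "(\<And>j. j < c \<Longrightarrow> u j = v j) \<Longrightarrow> mat_vec r c A u = mat_vec r c A v"
  by (auto simp: mat_vec_def fun_eq_iff intro!: sum.cong)

definition frob :: "nat \<Rightarrow> nat \<Rightarrow> (nat \<Rightarrow> nat \<Rightarrow> real) \<Rightarrow> real" where
  "frob r c A = sqrt (\<Sum>i<r. \<Sum>j<c. (A i j)\<^sup>2)"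

lemma mat_vec_frob: "vnorm r (mat_vec r c A v) \<le> frob r c A * vnorm c v"
proof -
  have row: "(\<Sum>j<c. A i j * v j)\<^sup>2 \<le> (\<Sum>j<c. (A i j)\<^sup>2) * (\<Sum>j<c. (v j)\<^sup>2)" for i
  proof -
    have "\<bar>\<Sum>j<c. A i j * v j\<bar> \<le> (\<Sum>j<c. \<bar>A i j\<bar> * \<bar>v j\<bar>)"
      by (rule order.trans[OF sum_abs]) (simp add: abs_mult)
    also have "\<dots> \<le> L2_set (A i) {..<c} * L2_set v {..<c}" by (rule L2_set_mult_ineq)
    finally have "(\<Sum>j<c. A i j * v j)\<^sup>2 \<le> (L2_set (A i) {..<c} * L2_set v {..<c})\<^sup>2"
      by (metis abs_ge_zero power2_abs power_mono)
    also have "\<dots> = (\<Sum>j<c. (A i j)\<^sup>2) * (\<Sum>j<c. (v j)\<^sup>2)"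
      by (simp add: L2_set_def power_mult_distrib sum_nonneg)
    finally show ?thesis .
  qed
  have "(\<Sum>i<r. (mat_vec r c A v i)\<^sup>2) \<le> (\<Sum>i<r. (\<Sum>j<c. (A i j)\<^sup>2) * (\<Sum>j<c. (v j)\<^sup>2))"
    by (intro sum_mono) (simp add: mat_vec_def row)
  also have "\<dots> = (\<Sum>i<r. \<Sum>j<c. (A i j)\<^sup>2) * (\<Sum>j<c. (v j)\<^sup>2)"
    by (simp add: sum_distrib_right)
  finally have "sqrt (\<Sum>i<r. (mat_vec r c A v i)\<^sup>2) \<le> sqrt ((\<Sum>i<r. \<Sum>j<c. (A i j)\<^sup>2) * (\<Sum>j<c. (v j)\<^sup>2))"
    by (rule real_sqrt_le_mono)
  then show ?thesis by (simp add: vnorm_def frob_def real_sqrt_mult)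
qed

lemma frob_nonneg: "0 \<le> frob r c A" by (simp add: frob_def sum_nonneg)

definition unitball where "unitball c = {v \<in> vecs c. vnorm c v \<le> 1}"

lemma spec_norm_unit: "spec_norm r c A = (SUP v \<in> unitball c. vnorm r (mat_vec r c A v))"
  by (simp add: spec_norm_def unitball_def)

lemma zero_unitball: "(\<lambda>_. 0) \<in> unitball c" by (simp add: unitball_def vecs_def)

lemma bdd_spec: fixes A :: "nat \<Rightarrow> nat \<Rightarrow> real" shows "bdd_above ((\<lambda>v. vnorm r (mat_vec r c A v)) ` unitball c)"
proof (rule bdd_aboveI2)
  fix v assume "v \<in> unitball c"
  then have "vnorm c v \<le> 1" by (simp add: unitball_def)
  then have "frob r c A * vnorm c v \<le> frob r c A * 1"
    by (intro mult_left_mono frob_nonneg)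
  then show "vnorm r (mat_vec r c A v) \<le> frob r c A" using mat_vec_frob[where r=r and c=c and A=A and v=v] by simp
qed

lemma spec_upper: "v \<in> unitball c \<Longrightarrow> vnorm r (mat_vec r c A v) \<le> spec_norm r c A"
  unfolding spec_norm_unit by (rule cSUP_upper[OF _ bdd_spec])

lemma spec_norm_nonneg: "0 \<le> spec_norm r c A"
  using spec_upper[OF zero_unitball, where r=r and A=A and c=c] vnorm_nonneg[of r "\<lambda>_. 0"] by simp

lemma spec_least: "(\<And>v. v \<in> unitball c \<Longrightarrow> vnorm r (mat_vec r c A v) \<le> B) \<Longrightarrow> spec_norm r c A \<le> B"
  unfolding spec_norm_unit using zero_unitball by (intro cSUP_least) auto


lemma spec_norm_zero: "spec_norm r c (\<lambda>_ _. 0) = 0"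
  by (intro antisym spec_least spec_norm_nonneg) simp

lemma spec_norm_zero': "spec_norm r c (A - A) = 0"
  using spec_norm_zero by (simp add: fun_diff_def)

lemma spec_norm_add: "spec_norm r c (\<lambda>i j. A i j + B i j) \<le> spec_norm r c A + spec_norm r c B"
proof (rule spec_least)
  fix v assume v: "v \<in> unitball c"
  have "vnorm r (mat_vec r c (\<lambda>i j. A i j + B i j) v) \<le> vnorm r (mat_vec r c A v) + vnorm r (mat_vec r c B v)"
    unfolding mat_vec_add_mat by (rule vnorm_add)
  also have "\<dots> \<le> spec_norm r c A + spec_norm r c B"
    by (intro add_mono spec_upper v)
  finally show "vnorm r (mat_vec r c (\<lambda>i j. A i j + B i j) v) \<le> spec_norm r c A + spec_norm r c B" .
qed

lemma spec_bound: "vnorm r (mat_vec r c A v) \<le> spec_norm r c A * vnorm c v"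
proof -
  define v' where "v' = (\<lambda>i. if i < c then v i else 0)"
  have mv: "mat_vec r c A v = mat_vec r c A v'" by (rule mat_vec_cong) (simp add: v'_def)
  have nv: "vnorm c v = vnorm c v'" by (rule vnorm_cong) (simp add: v'_def)
  have v'v: "v' \<in> vecs c" by (simp add: v'_def vecs_def)
  show ?thesis
  proof (cases "vnorm c v' = 0")
    case True
    then have "mat_vec r c A v' = mat_vec r c A (\<lambda>_. 0)"
      by (intro mat_vec_cong) (simp add: vnorm_eq_0)
    then show ?thesis using mv nv True by simp
  next
    case False
    define t where "t = vnorm c v'"
    have tpos: "t > 0" using False by (simp add: t_def order_le_neq_trans)
    define u where "u = (\<lambda>i. (1/t) * v' i)"
    have "vnorm c u = (1/t) * t" unfolding u_def t_def by (subst vnorm_scale) auto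
    then have "u \<in> unitball c" using tpos v'v by (auto simp: unitball_def vecs_def u_def)
    then have "vnorm r (mat_vec r c A u) \<le> spec_norm r c A" by (rule spec_upper)
    moreover have "vnorm r (mat_vec r c A u) = (1/t) * vnorm r (mat_vec r c A v')"
      unfolding u_def mat_vec_scale using tpos by (subst vnorm_scale) auto
    ultimately have "vnorm r (mat_vec r c A v') \<le> spec_norm r c A * t"
      using tpos by (simp add: field_simps)
    then show ?thesis using mv nv by (simp add: t_def)
  qed
qed

lemma softmax_aux_ineq:
  fixes p x :: "nat \<Rightarrow> real"
  assumes p0: "\<And>i. i < k \<Longrightarrow> 0 \<le> p i" and p1: "\<And>i. i < k \<Longrightarrow> p i \<le> 1"
    and ps: "(\<Sum>i<k. p i) = 1"
  shows "(\<Sum>i<k. (p i * (x i - (\<Sum>j<k. p j * x j)))\<^sup>2) \<le> (\<Sum>i<k. (x i)\<^sup>2)"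
proof -
  define m where "m = (\<Sum>j<k. p j * x j)"
  have "(\<Sum>i<k. (p i * (x i - m))\<^sup>2) \<le> (\<Sum>i<k. p i * (x i - m)\<^sup>2)"
  proof (intro sum_mono)
    fix i assume "i \<in> {..<k}"
    then have "0 \<le> p i" "p i \<le> 1" using p0 p1 by auto
    then have "p i * p i \<le> p i" by (simp add: mult_left_le)
    then have "(p i * p i) * (x i - m)\<^sup>2 \<le> p i * (x i - m)\<^sup>2" by (simp add: mult_right_mono)
    then show "(p i * (x i - m))\<^sup>2 \<le> p i * (x i - m)\<^sup>2" by (simp add: power2_eq_square algebra_simps)
  qed
  also have "(\<Sum>i<k. p i * (x i - m)\<^sup>2) = (\<Sum>i<k. p i * (x i)\<^sup>2) - 2 * m * (\<Sum>i<k. p i * x i) + m\<^sup>2 * (\<Sum>i<k. p i)"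
    by (simp add: power2_eq_square algebra_simps sum.distrib sum_subtractf sum_distrib_left sum_distrib_right)
  also have "\<dots> = (\<Sum>i<k. p i * (x i)\<^sup>2) - m\<^sup>2" by (simp add: ps m_def power2_eq_square)
  also have "\<dots> \<le> (\<Sum>i<k. p i * (x i)\<^sup>2)" by simp
  also have "\<dots> \<le> (\<Sum>i<k. (x i)\<^sup>2)"
  proof (intro sum_mono)
    fix i assume "i \<in> {..<k}"
    then have "p i \<le> 1" "0 \<le> p i" using p1 p0 by auto
    then show "p i * (x i)\<^sup>2 \<le> (x i)\<^sup>2" by (simp add: mult_left_le_one_le)
  qed
  finally show ?thesis by (simp add: m_def)
qed

lemma softmax_lip: "vnorm k (softmax k u - softmax k v) \<le> vnorm k (u - v)"
proof -
  define x where "x = (\<lambda>i. v i - u i)"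
  define Z where "Z = (\<lambda>t. \<Sum>j<k. exp (u j + t * x j))"
  define p where "p = (\<lambda>t i. exp (u i + t * x i) / Z t)"
  define m where "m = (\<lambda>t. \<Sum>j<k. p t j * x j)"
  define e where "e = (\<lambda>i. softmax k v i - softmax k u i)"
  define g where "g = (\<lambda>t. \<Sum>i<k. e i * p t i)"
  define N where "N = vnorm k e"
  show ?thesis
  proof (cases "k = 0")
    case True then show ?thesis by (simp add: vnorm_def)
  next
    case False
    have Zpos: "Z t > 0" for t unfolding Z_def using False by (intro sum_pos) auto
    have p0: "0 \<le> p t i" for t i using Zpos[of t] by (simp add: p_def)
    have psum: "(\<Sum>i<k. p t i) = 1" for t
      using Zpos[of t] by (simp add: p_def Z_def flip: sum_divide_distrib)
    have p1: "p t i \<le> 1" if "i < k" for t i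
    proof -
      have "p t i \<le> (\<Sum>j<k. p t j)" using that p0 by (intro member_le_sum) auto
      then show ?thesis using psum by simp
    qed
    have p01: "p 0 i = softmax k u i" "p 1 i = softmax k v i" if "i < k" for i
      using that by (simp_all add: p_def Z_def softmax_def x_def)
    have dp: "((\<lambda>t. p t i) has_real_derivative p t i * (x i - m t)) (at t)" for t i
    proof -
      have dZ: "(Z has_real_derivative (\<Sum>j<k. exp (u j + t * x j) * x j)) (at t)"
        unfolding Z_def by (auto intro!: derivative_eq_intros)
      have "((\<lambda>t. exp (u i + t * x i) / Z t) has_real_derivative
             ((exp (u i + t * x i) * x i) * Z t - exp (u i + t * x i) * (\<Sum>j<k. exp (u j + t * x j) * x j)) / (Z t * Z t)) (at t)"
        by (rule DERIV_divide[OF _ dZ]) (use Zpos[of t] in \<open>auto intro!: derivative_eq_intros\<close>)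
      moreover have "((exp (u i + t * x i) * x i) * Z t - exp (u i + t * x i) * (\<Sum>j<k. exp (u j + t * x j) * x j)) / (Z t * Z t)
          = p t i * (x i - m t)"
        using Zpos[of t] by (simp add: p_def m_def field_simps sum_divide_distrib sum_distrib_left)
      ultimately show ?thesis by (simp add: p_def)
    qed
    have dg: "(g has_real_derivative (\<Sum>i<k. e i * (p t i * (x i - m t)))) (at t)" for t
      unfolding g_def by (auto intro!: derivative_eq_intros dp sum.cong)
    obtain z where "g 1 - g 0 = (1 - 0) * (\<Sum>i<k. e i * (p z i * (x i - m z)))"
      using MVT2[of 0 1 g, OF _ dg] by auto
    then have geq: "g 1 - g 0 = (\<Sum>i<k. e i * (p z i * (x i - m z)))" by simp
    have "g 1 - g 0 = (\<Sum>i<k. (e i)\<^sup>2)"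
      unfolding g_def by (simp add: p01 e_def power2_eq_square algebra_simps sum_subtractf flip: sum_subtractf)
    then have "N\<^sup>2 = (\<Sum>i<k. e i * (p z i * (x i - m z)))"
      using geq by (simp add: N_def vnorm_def sum_nonneg)
    also have "\<dots> \<le> (\<Sum>i<k. \<bar>e i\<bar> * \<bar>p z i * (x i - m z)\<bar>)"
      by (intro sum_mono) (metis abs_ge_self abs_mult)
    also have "\<dots> \<le> L2_set e {..<k} * L2_set (\<lambda>i. p z i * (x i - m z)) {..<k}"
      by (rule L2_set_mult_ineq)
    also have "L2_set (\<lambda>i. p z i * (x i - m z)) {..<k} \<le> L2_set x {..<k}"
      unfolding L2_set_def m_def
      by (intro real_sqrt_le_mono softmax_aux_ineq p0 p1 psum)
    then have "L2_set e {..<k} * L2_set (\<lambda>i. p z i * (x i - m z)) {..<k} \<le> N * L2_set x {..<k}"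
      by (simp add: N_def vnorm_L2 mult_left_mono)
    finally have N2: "N\<^sup>2 \<le> N * L2_set x {..<k}" .
    have Nx: "N \<le> L2_set x {..<k}"
    proof (cases "N = 0")
      case True then show ?thesis by simp
    next
      case False
      then have "N > 0" using vnorm_nonneg[of k e] by (simp add: N_def order_le_neq_trans)
      then show ?thesis using N2 by (simp add: power2_eq_square)
    qed
    have "vnorm k (softmax k u - softmax k v) = N"
      unfolding N_def e_def vnorm_def by (intro arg_cong[where f=sqrt] sum.cong) (auto simp: power2_commute)
    moreover have "L2_set x {..<k} = vnorm k (u - v)"
      unfolding x_def vnorm_def L2_set_def by (intro arg_cong[where f=sqrt] sum.cong) (auto simp: power2_commute)
    ultimately show ?thesis using Nx by simp
  qed
qed

lemma vnorm_diff_zero[simp]: "vnorm k (u - (\<lambda>_. 0)) = vnorm k u"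
  by (simp add: fun_diff_def)

lemma zero_vecs[simp]: "(\<lambda>_. 0) \<in> vecs k" by (simp add: vecs_def)

context
  fixes d :: nat and \<delta> :: "nat \<Rightarrow> nat" and \<phi> :: "nat \<Rightarrow> (nat \<Rightarrow> real) \<Rightarrow> (nat \<Rightarrow> real)"
  assumes \<phi>_dim: "\<forall>j\<in>{1..<d}. \<forall>u\<in>vecs (\<delta> j). \<phi> (\<delta> j) u \<in> vecs (\<delta> j)"
    and \<phi>_lip: "\<forall>j\<in>{1..<d}. \<forall>u\<in>vecs (\<delta> j). \<forall>v\<in>vecs (\<delta> j).
                   vnorm (\<delta> j) (\<phi> (\<delta> j) u - \<phi> (\<delta> j) v) \<le> vnorm (\<delta> j) (u - v)"
    and \<phi>_0: "\<forall>j\<in>{1..<d}. \<phi> (\<delta> j) (\<lambda>_. 0) = (\<lambda>_. 0)"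
begin

lemma phi_lip': "1 \<le> j \<Longrightarrow> j < d \<Longrightarrow> vnorm (\<delta> j) (\<phi> (\<delta> j) (mat_vec (\<delta> j) c A a) - \<phi> (\<delta> j) (mat_vec (\<delta> j) c' B b))
   \<le> vnorm (\<delta> j) (mat_vec (\<delta> j) c A a - mat_vec (\<delta> j) c' B b)"
  using \<phi>_lip mat_vec_vecs by auto

lemma phi_norm': "1 \<le> j \<Longrightarrow> j < d \<Longrightarrow> vnorm (\<delta> j) (\<phi> (\<delta> j) (mat_vec (\<delta> j) c A a)) \<le> vnorm (\<delta> j) (mat_vec (\<delta> j) c A a)"
  using \<phi>_lip mat_vec_vecs[of "\<delta> j" c A a] \<phi>_0
  by (metis atLeastLessThan_iff vnorm_diff_zero zero_vecs)

lemma layers_norm: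
  assumes "j < d"
  shows "vnorm (\<delta> j) (layers \<delta> \<phi> w j x) \<le> vnorm (\<delta> 0) x * (\<Prod>i\<in>{1..j}. spec_norm (\<delta> i) (\<delta> (i - 1)) (w i))"
  using assms
proof (induction j)
  case 0 then show ?case by simp
next
  case (Suc j)
  have "vnorm (\<delta> (Suc j)) (layers \<delta> \<phi> w (Suc j) x)
     \<le> vnorm (\<delta> (Suc j)) (mat_vec (\<delta> (Suc j)) (\<delta> j) (w (Suc j)) (layers \<delta> \<phi> w j x))"
    using phi_norm'[of "Suc j"] Suc.prems by simp
  also have "\<dots> \<le> spec_norm (\<delta> (Suc j)) (\<delta> j) (w (Suc j)) * vnorm (\<delta> j) (layers \<delta> \<phi> w j x)"
    by (rule spec_bound)
  also have "\<dots> \<le> spec_norm (\<delta> (Suc j)) (\<delta> j) (w (Suc j)) * (vnorm (\<delta> 0) x * (\<Prod>i\<in>{1..j}. spec_norm (\<delta> i) (\<delta> (i - 1)) (w i)))"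
    using Suc by (intro mult_left_mono spec_norm_nonneg) auto
  also have "\<dots> = vnorm (\<delta> 0) x * (\<Prod>i\<in>{1..Suc j}. spec_norm (\<delta> i) (\<delta> (i - 1)) (w i))"
    by (simp add: prod.nat_ivl_Suc')
  finally show ?case .
qed

lemma layers_eq:
  assumes "\<And>i. i \<noteq> k \<Longrightarrow> w i = w' i" "j < k"
  shows "layers \<delta> \<phi> w j x = layers \<delta> \<phi> w' j x"
  using assms(2) by (induction j) (auto simp: assms(1))

lemma layers_diff:
  assumes ww: "\<And>i. i \<noteq> k \<Longrightarrow> w i = w' i" and k: "1 \<le> k" "k \<le> j" and j: "j < d"
  shows "vnorm (\<delta> j) (layers \<delta> \<phi> w j x - layers \<delta> \<phi> w' j x)
     \<le> vnorm (\<delta> 0) x * (\<Prod>i\<in>{1..j}-{k}. spec_norm (\<delta> i) (\<delta> (i - 1)) (w i))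
        * spec_norm (\<delta> k) (\<delta> (k - 1)) (w k - w' k)"
  using k j
proof (induction j)
  case 0 then show ?case by simp
next
  case (Suc j)
  show ?case
  proof (cases "Suc j = k")
    case True
    have eq: "layers \<delta> \<phi> w j x = layers \<delta> \<phi> w' j x" using True by (intro layers_eq[OF ww]) auto
    have "vnorm (\<delta> (Suc j)) (layers \<delta> \<phi> w (Suc j) x - layers \<delta> \<phi> w' (Suc j) x)
      \<le> vnorm (\<delta> (Suc j)) (mat_vec (\<delta> (Suc j)) (\<delta> j) (w (Suc j)) (layers \<delta> \<phi> w j x) -
              mat_vec (\<delta> (Suc j)) (\<delta> j) (w' (Suc j)) (layers \<delta> \<phi> w j x))"
      using phi_lip'[of "Suc j"] Suc.prems eq by simp
    also have "\<dots> = vnorm (\<delta> (Suc j)) (mat_vec (\<delta> (Suc j)) (\<delta> j) (w (Suc j) - w' (Suc j)) (layers \<delta> \<phi> w j x))"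
      by (simp add: mat_vec_diff_mat)
    also have "\<dots> \<le> spec_norm (\<delta> (Suc j)) (\<delta> j) (w (Suc j) - w' (Suc j)) * vnorm (\<delta> j) (layers \<delta> \<phi> w j x)"
      by (rule spec_bound)
    also have "\<dots> \<le> spec_norm (\<delta> (Suc j)) (\<delta> j) (w (Suc j) - w' (Suc j)) * (vnorm (\<delta> 0) x * (\<Prod>i\<in>{1..j}. spec_norm (\<delta> i) (\<delta> (i - 1)) (w i)))"
      using Suc.prems by (intro mult_left_mono spec_norm_nonneg layers_norm) auto
    also have "{1..j} = {1..Suc j} - {k}" using True by auto
    also have "\<delta> j = \<delta> (k - 1)" by (metis True diff_Suc_1)
    finally show ?thesis using True by (simp add: mult_ac fun_diff_def)
  next
    case False
    then have kj: "k \<le> j" using Suc.prems by simp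
    have IH: "vnorm (\<delta> j) (layers \<delta> \<phi> w j x - layers \<delta> \<phi> w' j x)
     \<le> vnorm (\<delta> 0) x * (\<Prod>i\<in>{1..j}-{k}. spec_norm (\<delta> i) (\<delta> (i - 1)) (w i))
        * spec_norm (\<delta> k) (\<delta> (k - 1)) (w k - w' k)" using Suc kj by (simp add: fun_diff_def)
    have wS: "w' (Suc j) = w (Suc j)" using ww False by metis
    have "vnorm (\<delta> (Suc j)) (layers \<delta> \<phi> w (Suc j) x - layers \<delta> \<phi> w' (Suc j) x)
      \<le> vnorm (\<delta> (Suc j)) (mat_vec (\<delta> (Suc j)) (\<delta> j) (w (Suc j)) (layers \<delta> \<phi> w j x) -
              mat_vec (\<delta> (Suc j)) (\<delta> j) (w (Suc j)) (layers \<delta> \<phi> w' j x))"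
      using phi_lip'[of "Suc j"] Suc.prems wS by simp
    also have "\<dots> = vnorm (\<delta> (Suc j)) (mat_vec (\<delta> (Suc j)) (\<delta> j) (w (Suc j)) (layers \<delta> \<phi> w j x - layers \<delta> \<phi> w' j x))"
      by (simp add: mat_vec_diff_vec)
    also have "\<dots> \<le> spec_norm (\<delta> (Suc j)) (\<delta> j) (w (Suc j)) * vnorm (\<delta> j) (layers \<delta> \<phi> w j x - layers \<delta> \<phi> w' j x)"
      by (rule spec_bound)
    also have "\<dots> \<le> spec_norm (\<delta> (Suc j)) (\<delta> j) (w (Suc j)) * (vnorm (\<delta> 0) x * (\<Prod>i\<in>{1..j}-{k}. spec_norm (\<delta> i) (\<delta> (i - 1)) (w i))
        * spec_norm (\<delta> k) (\<delta> (k - 1)) (w k - w' k))"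
      by (intro mult_left_mono spec_norm_nonneg IH)
    also have "{1..Suc j} - {k} = insert (Suc j) ({1..j} - {k})" using False by auto
    then have "(\<Prod>i\<in>{1..Suc j}-{k}. spec_norm (\<delta> i) (\<delta> (i - 1)) (w i)) =
       spec_norm (\<delta> (Suc j)) (\<delta> j) (w (Suc j)) * (\<Prod>i\<in>{1..j}-{k}. spec_norm (\<delta> i) (\<delta> (i - 1)) (w i))"
      by simp
    ultimately show ?thesis by (simp add: mult_ac fun_diff_def)
  qed
qed

lemma net_diff:
  assumes ww: "\<And>i. i \<noteq> k \<Longrightarrow> w i = w' i" and k: "1 \<le> k" "k \<le> d" and d: "2 \<le> d"
    and \<phi>o: "\<phi>o = id \<or> \<phi>o = softmax (\<delta> d)"
  shows "vnorm (\<delta> d) (net d \<delta> \<phi> \<phi>o w x - net d \<delta> \<phi> \<phi>o w' x)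
     \<le> vnorm (\<delta> 0) x * (\<Prod>i\<in>{1..d}-{k}. spec_norm (\<delta> i) (\<delta> (i - 1)) (w i))
        * spec_norm (\<delta> k) (\<delta> (k - 1)) (w k - w' k)"
proof -
  define a where "a = layers \<delta> \<phi> w (d - 1) x"
  define b where "b = layers \<delta> \<phi> w' (d - 1) x"
  have o: "vnorm (\<delta> d) (\<phi>o u - \<phi>o v) \<le> vnorm (\<delta> d) (u - v)" for u v
    using \<phi>o softmax_lip by auto
  have "vnorm (\<delta> d) (net d \<delta> \<phi> \<phi>o w x - net d \<delta> \<phi> \<phi>o w' x)
     \<le> vnorm (\<delta> d) (mat_vec (\<delta> d) (\<delta> (d - 1)) (w d) a - mat_vec (\<delta> d) (\<delta> (d - 1)) (w' d) b)"
    unfolding net_def a_def b_def by (rule o)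
  also have "\<dots> \<le> vnorm (\<delta> 0) x * (\<Prod>i\<in>{1..d}-{k}. spec_norm (\<delta> i) (\<delta> (i - 1)) (w i))
        * spec_norm (\<delta> k) (\<delta> (k - 1)) (w k - w' k)"
  proof (cases "k = d")
    case True
    have ab: "a = b" unfolding a_def b_def using True d by (intro layers_eq[OF ww]) auto
    have "vnorm (\<delta> d) (mat_vec (\<delta> d) (\<delta> (d - 1)) (w d) a - mat_vec (\<delta> d) (\<delta> (d - 1)) (w' d) b)
       = vnorm (\<delta> d) (mat_vec (\<delta> d) (\<delta> (d - 1)) (w d - w' d) a)" by (simp add: ab mat_vec_diff_mat)
    also have "\<dots> \<le> spec_norm (\<delta> d) (\<delta> (d - 1)) (w d - w' d) * vnorm (\<delta> (d - 1)) a" by (rule spec_bound)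
    also have "\<dots> \<le> spec_norm (\<delta> d) (\<delta> (d - 1)) (w d - w' d) * (vnorm (\<delta> 0) x * (\<Prod>i\<in>{1..d-1}. spec_norm (\<delta> i) (\<delta> (i - 1)) (w i)))"
      unfolding a_def using d by (intro mult_left_mono spec_norm_nonneg layers_norm) auto
    also have "{1..d-1} = {1..d} - {k}" using True d by auto
    finally show ?thesis using True by (simp add: mult_ac fun_diff_def)
  next
    case False
    have wd: "w' d = w d" using ww False by metis
    have "vnorm (\<delta> d) (mat_vec (\<delta> d) (\<delta> (d - 1)) (w d) a - mat_vec (\<delta> d) (\<delta> (d - 1)) (w' d) b)
       = vnorm (\<delta> d) (mat_vec (\<delta> d) (\<delta> (d - 1)) (w d) (a - b))" by (simp add: wd mat_vec_diff_vec)
    also have "\<dots> \<le> spec_norm (\<delta> d) (\<delta> (d - 1)) (w d) * vnorm (\<delta> (d - 1)) (a - b)" by (rule spec_bound)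
    also have "\<dots> \<le> spec_norm (\<delta> d) (\<delta> (d - 1)) (w d) * (vnorm (\<delta> 0) x * (\<Prod>i\<in>{1..d-1}-{k}. spec_norm (\<delta> i) (\<delta> (i - 1)) (w i))
        * spec_norm (\<delta> k) (\<delta> (k - 1)) (w k - w' k))"
      unfolding a_def b_def using d k False by (intro mult_left_mono spec_norm_nonneg layers_diff[OF ww]) auto
    also have eqs: "{1..d} - {k} = insert d ({1..d-1} - {k})" using False d by auto
    then have "(\<Prod>i\<in>{1..d}-{k}. spec_norm (\<delta> i) (\<delta> (i - 1)) (w i)) =
       spec_norm (\<delta> d) (\<delta> (d - 1)) (w d) * (\<Prod>i\<in>{1..d-1}-{k}. spec_norm (\<delta> i) (\<delta> (i - 1)) (w i))"
      unfolding eqs using d by (subst prod.insert) auto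
    ultimately show ?thesis by (simp add: mult_ac)
  qed
  finally show ?thesis .
qed

end

lemma DV_aux:
  fixes g :: "'a \<Rightarrow> real"
  assumes Q: "prob_space Q" and P: "prob_space P" and sets: "sets P = sets Q"
    and ac: "absolutely_continuous Q P" and int: "integrable P (entropy_density (exp 1) Q P)"
    and g: "g \<in> borel_measurable Q" and intg: "integrable P g"
    and C: "(\<integral>\<^sup>+x. ennreal (exp (g x)) \<partial>Q) \<le> ennreal C" and C0: "0 \<le> C"
  shows "integral\<^sup>L P g \<le> KL_divergence (exp 1) Q P + C - 1"
proof -
  interpret Q: prob_space Q by fact
  interpret P: prob_space P by fact
  have Pd: "density Q (RN_deriv Q P) = P" using Q.density_RN_deriv[OF ac sets] .
  define \<rho> where "\<rho> = (\<lambda>x. enn2real (RN_deriv Q P x))"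
  have RNm[measurable]: "RN_deriv Q P \<in> borel_measurable Q" by simp
  have mPQ: "measurable P N = measurable Q N" for N :: "'b measure" by (rule measurable_cong_sets[OF sets refl])
  have gP[measurable]: "g \<in> borel_measurable P" using g by (simp only: mPQ)
  have "\<rho> \<in> borel_measurable Q" unfolding \<rho>_def by measurable
  then have \<rho>m[measurable]: "\<rho> \<in> borel_measurable P" by (simp only: mPQ)
  have finQ: "AE x in Q. RN_deriv Q P x \<noteq> \<infinity>"
    by (rule Q.RN_deriv_finite[OF _ ac sets]) (simp add: P.sigma_finite_measure_axioms)
  have "AE x in density Q (RN_deriv Q P). 0 < RN_deriv Q P x \<and> RN_deriv Q P x \<noteq> \<infinity>"
    using finQ by (subst AE_density) (auto elim: eventually_mono)
  then have posP: "AE x in P. 0 < \<rho> x" unfolding Pd \<rho>_def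
    by (rule eventually_mono) (auto simp: enn2real_positive_iff top.not_eq_extremum)
  define h where "h = (\<lambda>x. exp (g x) / \<rho> x)"
  have hm[measurable]: "h \<in> borel_measurable P" unfolding h_def by measurable
  have hQ: "h \<in> borel_measurable Q" using hm by (simp only: mPQ)
  have "(\<integral>\<^sup>+x. ennreal (h x) \<partial>P) = (\<integral>\<^sup>+x. RN_deriv Q P x * ennreal (h x) \<partial>Q)"
  proof -
    have "(\<integral>\<^sup>+x. ennreal (h x) \<partial>density Q (RN_deriv Q P)) = (\<integral>\<^sup>+x. RN_deriv Q P x * ennreal (h x) \<partial>Q)"
      by (rule nn_integral_density) (simp_all add: RNm measurable_compose[OF hQ measurable_ennreal])
    then show ?thesis by (simp only: Pd)
  qed
  also have "\<dots> \<le> (\<integral>\<^sup>+x. ennreal (exp (g x)) \<partial>Q)"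
  proof (rule nn_integral_mono_AE)
    show "AE x in Q. RN_deriv Q P x * ennreal (h x) \<le> ennreal (exp (g x))"
      using finQ
    proof (rule eventually_mono)
      fix x assume fin: "RN_deriv Q P x \<noteq> \<infinity>"
      then have "RN_deriv Q P x = ennreal (\<rho> x)" by (simp add: \<rho>_def ennreal_enn2real_if top.not_eq_extremum)
      moreover have "0 \<le> \<rho> x" by (simp add: \<rho>_def)
      moreover have "\<rho> x * h x \<le> exp (g x)" unfolding h_def by (cases "\<rho> x = 0") auto
      ultimately show "RN_deriv Q P x * ennreal (h x) \<le> ennreal (exp (g x))"
        by (simp add: ennreal_mult'[symmetric])
    qed
  qed
  also have "\<dots> \<le> ennreal C" by (rule C)
  finally have hC: "(\<integral>\<^sup>+x. ennreal (h x) \<partial>P) \<le> ennreal C" .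
  have h0: "0 \<le> h x" for x unfolding h_def \<rho>_def by simp
  have hint: "integrable P h"
    by (rule integrableI_nonneg) (use hC h0 in \<open>auto simp: top.not_eq_extremum intro: le_less_trans\<close>)
  have "ennreal (integral\<^sup>L P h) = (\<integral>\<^sup>+x. ennreal (h x) \<partial>P)"
    by (rule nn_integral_eq_integral[symmetric]) (use hint h0 in auto)
  then have hle: "integral\<^sup>L P h \<le> C" using hC C0 by (simp add: ennreal_le_iff[OF C0, symmetric]) 
  have ed: "entropy_density (exp 1) Q P x = ln (\<rho> x)" for x
    by (simp add: entropy_density_def \<rho>_def log_def)
  have pw: "AE x in P. g x - entropy_density (exp 1) Q P x \<le> h x - 1"
    using posP
  proof (rule eventually_mono)
    fix x assume px: "0 < \<rho> x"
    have "ln (h x) \<le> h x - 1" using px by (intro ln_le_minus_one) (simp add: h_def)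
    moreover have "ln (h x) = g x - ln (\<rho> x)" using px by (simp add: h_def ln_div)
    ultimately show "g x - entropy_density (exp 1) Q P x \<le> h x - 1" by (simp add: ed)
  qed
  have "integral\<^sup>L P g - KL_divergence (exp 1) Q P = (\<integral>x. g x - entropy_density (exp 1) Q P x \<partial>P)"
    unfolding KL_divergence_def using intg int by simp
  also have "\<dots> \<le> (\<integral>x. h x - 1 \<partial>P)"
    by (rule integral_mono_AE) (use intg int hint pw in auto)
  also have "\<dots> = integral\<^sup>L P h - 1" using hint by (simp add: P.prob_space)
  finally show ?thesis using hle by simp
qed

lemma hoeff_one:
  fixes F :: "'z \<Rightarrow> real"
  assumes \<mu>: "prob_space \<mu>" and Fm: "F \<in> borel_measurable \<mu>" and Fb: "\<And>z. z \<in> space \<mu> \<Longrightarrow> \<bar>F z\<bar> \<le> B"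
    and l: "0 < l"
  shows "(\<integral>\<^sup>+z. ennreal (exp (l * ((\<integral>z. F z \<partial>\<mu>) - F z))) \<partial>\<mu>) \<le> ennreal (exp (l\<^sup>2 * B\<^sup>2 / 2))"
proof -
  interpret prob_space \<mu> by fact
  interpret ib: interval_bounded_random_variable \<mu> "\<lambda>z. - F z" "-B" B
    by unfold_locales (use Fm Fb in \<open>auto intro!: AE_I2 simp: abs_le_iff\<close>)
  have "(\<integral>\<^sup>+z. ennreal (exp (l * ((- F z) - expectation (\<lambda>z. - F z)))) \<partial>\<mu>) \<le> ennreal (exp (l\<^sup>2 * (B - - B)\<^sup>2 / 8))"
    by (rule ib.Hoeffdings_lemma_nn_integral[OF l])
  moreover have "l\<^sup>2 * (B - - B)\<^sup>2 / 8 = l\<^sup>2 * B\<^sup>2 / 2" by (simp add: power2_eq_square algebra_simps)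
  moreover have "(- F z) - expectation (\<lambda>z. - F z) = (\<integral>z. F z \<partial>\<mu>) - F z" for z by simp
  ultimately show ?thesis by (simp add: mult_ac)
qed

lemma hoeff_prod:
  fixes F :: "'z \<Rightarrow> real"
  assumes \<mu>: "prob_space \<mu>" and Fm: "F \<in> borel_measurable \<mu>" and Fb: "\<And>z. z \<in> space \<mu> \<Longrightarrow> \<bar>F z\<bar> \<le> B"
    and l: "0 < l" and n: "0 < n"
  shows "(\<integral>\<^sup>+s. ennreal (exp (l * ((1 / real n) * (\<Sum>i<n. (\<integral>z. F z \<partial>\<mu>) - F (s i))))) \<partial>(\<Pi>\<^sub>M i\<in>{..<n}. \<mu>))
     \<le> ennreal (exp (l\<^sup>2 * B\<^sup>2 / (2 * real n)))"
proof -
  interpret prob_space \<mu> by fact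
  interpret ps: product_sigma_finite "\<lambda>_. \<mu>"
    by (simp add: product_sigma_finite_def sigma_finite_measure_axioms)
  define c where "c = (\<integral>z. F z \<partial>\<mu>)"
  define l' where "l' = l / real n"
  have l': "0 < l'" using l n by (simp add: l'_def)
  have "(\<integral>\<^sup>+s. ennreal (exp (l * ((1 / real n) * (\<Sum>i<n. c - F (s i))))) \<partial>(\<Pi>\<^sub>M i\<in>{..<n}. \<mu>))
      = (\<integral>\<^sup>+s. (\<Prod>i\<in>{..<n}. ennreal (exp (l' * (c - F (s i))))) \<partial>(\<Pi>\<^sub>M i\<in>{..<n}. \<mu>))"
  proof (rule nn_integral_cong)
    fix s
    have "exp (l * ((1 / real n) * (\<Sum>i<n. c - F (s i)))) = exp (\<Sum>i<n. l' * (c - F (s i)))"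
      by (simp add: l'_def sum_distrib_left)
    also have "\<dots> = (\<Prod>i<n. exp (l' * (c - F (s i))))" by (rule exp_sum) simp
    finally show "ennreal (exp (l * ((1 / real n) * (\<Sum>i<n. c - F (s i))))) = (\<Prod>i\<in>{..<n}. ennreal (exp (l' * (c - F (s i)))))"
      by (simp add: prod_ennreal)
  qed
  also have "\<dots> = (\<Prod>i\<in>{..<n}. \<integral>\<^sup>+z. ennreal (exp (l' * (c - F z))) \<partial>\<mu>)"
    by (rule ps.product_nn_integral_prod) (use Fm in auto)
  also have "\<dots> \<le> (\<Prod>i\<in>{..<n}. ennreal (exp (l'\<^sup>2 * B\<^sup>2 / 2)))"
    by (rule prod_mono_ennreal) (use hoeff_one[OF \<mu> Fm Fb l'] in \<open>auto simp: c_def\<close>)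
  also have "\<dots> = ennreal (exp (l'\<^sup>2 * B\<^sup>2 / 2) ^ n)"
    by (simp add: ennreal_power)
  also have "exp (l'\<^sup>2 * B\<^sup>2 / 2) ^ n = exp (real n * (l'\<^sup>2 * B\<^sup>2 / 2))"
    by (rule exp_of_nat_mult[symmetric])
  also have "real n * (l'\<^sup>2 * B\<^sup>2 / 2) = l\<^sup>2 * B\<^sup>2 / (2 * real n)"
    using n by (simp add: l'_def power2_eq_square field_simps)
  finally show ?thesis by (simp add: c_def)
qed

lemma opt_lambda:
  fixes E I c :: real
  assumes H: "\<And>l. 0 < l \<Longrightarrow> l * E \<le> I + l\<^sup>2 * c" and I: "0 \<le> I" and c: "0 < c"
  shows "E \<le> 2 * sqrt (I * c)"
proof (cases "I = 0")
  case True
  show ?thesis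
  proof (rule ccontr)
    assume "\<not> ?thesis"
    then have E: "E > 0" using True by simp
    define l where "l = E / (2 * c)"
    have l: "l > 0" using E c by (simp add: l_def)
    have "l * E \<le> l\<^sup>2 * c" using H[OF l] True by simp
    then have "E * E / (2 * c) \<le> E * E / (4 * c)" using c by (simp add: l_def power2_eq_square field_simps)
    moreover have "E * E / (4 * c) < E * E / (2 * c)" using E c by (intro divide_strict_left_mono) auto
    ultimately show False by simp
  qed
next
  case False
  then have Ip: "I > 0" using I by simp
  define l where "l = sqrt (I / c)"
  have l: "l > 0" using Ip c by (simp add: l_def)
  have l2: "l\<^sup>2 * c = I" using Ip c by (simp add: l_def)
  have "l * E \<le> 2 * I" using H[OF l] l2 by simp
  then have "E \<le> 2 * I / l" using l by (simp add: pos_le_divide_eq mult.commute)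
  also have "2 * I / l = 2 * sqrt (I * c)"
  proof -
    have "sqrt (I * c) * l = sqrt (I * c * (I / c))" unfolding l_def by (rule real_sqrt_mult[symmetric])
    also have "I * c * (I / c) = I * I" using c by simp
    also have "sqrt (I * I) = I" using I by simp
    finally have eq: "sqrt (I * c) * l = I" .
    have "2 * I / l = 2 * (sqrt (I * c) * l) / l" by (simp only: eq)
    also have "\<dots> = 2 * sqrt (I * c)" using l by simp
    finally show ?thesis .
  qed
  finally show ?thesis .
qed

lemma XR_bound:
  fixes \<Delta> :: "'w \<Rightarrow> 'z \<Rightarrow> real" and V :: "'w measure" and \<mu> :: "'z measure"
    and J :: "((nat \<Rightarrow> 'z) \<times> 'w) measure"
  assumes \<mu>: "prob_space \<mu>" and V: "prob_space V" and J: "prob_space J"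
    and setsJ: "sets J = sets ((\<Pi>\<^sub>M i\<in>{..<n}. \<mu>) \<Otimes>\<^sub>M V)"
    and ac: "absolutely_continuous ((\<Pi>\<^sub>M i\<in>{..<n}. \<mu>) \<Otimes>\<^sub>M V) J"
    and int: "integrable J (entropy_density (exp 1) ((\<Pi>\<^sub>M i\<in>{..<n}. \<mu>) \<Otimes>\<^sub>M V) J)"
    and \<Delta>m: "(\<lambda>(u, z). \<Delta> u z) \<in> borel_measurable (V \<Otimes>\<^sub>M \<mu>)"
    and \<Delta>b: "\<And>u z. u \<in> space V \<Longrightarrow> z \<in> space \<mu> \<Longrightarrow> \<bar>\<Delta> u z\<bar> \<le> B"
    and B: "0 < B" and n: "0 < n"
  shows "0 \<le> KL_divergence (exp 1) ((\<Pi>\<^sub>M i\<in>{..<n}. \<mu>) \<Otimes>\<^sub>M V) J"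
    and "(\<integral>p. (1 / real n) * (\<Sum>i<n. (\<integral>z. \<Delta> (snd p) z \<partial>\<mu>) - \<Delta> (snd p) (fst p i)) \<partial>J)
          \<le> B * sqrt 2 * sqrt (KL_divergence (exp 1) ((\<Pi>\<^sub>M i\<in>{..<n}. \<mu>) \<Otimes>\<^sub>M V) J) / sqrt (real n)"
proof -
  interpret \<mu>: prob_space \<mu> by fact
  interpret V: prob_space V by fact
  interpret J: prob_space J by fact
  define Sn where "Sn = (\<Pi>\<^sub>M i\<in>{..<n}. \<mu>)"
  interpret Sn: prob_space Sn unfolding Sn_def
    by (intro prob_space_PiM) (simp add: \<mu>.prob_space_axioms)
  interpret SV: pair_prob_space Sn V by unfold_locales
  define Q where "Q = Sn \<Otimes>\<^sub>M V"
  have Q: "prob_space Q" unfolding Q_def by (rule SV.prob_space_axioms)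
  define KL where "KL = KL_divergence (exp 1) Q J"
  have setsJ': "sets J = sets Q" using setsJ by (simp add: Q_def Sn_def)
  have ac': "absolutely_continuous Q J" using ac by (simp add: Q_def Sn_def)
  have int': "integrable J (entropy_density (exp 1) Q J)" using int by (simp add: Q_def Sn_def)
  have mJQ: "measurable J N = measurable Q N" for N :: "'c measure" by (rule measurable_cong_sets[OF setsJ' refl])
  note [measurable] = \<Delta>m
  define Db where "Db = (\<lambda>u. \<integral>z. \<Delta> u z \<partial>\<mu>)"
  have Dbm[measurable]: "Db \<in> borel_measurable V" unfolding Db_def
    by (rule \<mu>.borel_measurable_lebesgue_integral) (use \<Delta>m in simp)
  define f where "f = (\<lambda>p. (1 / real n) * (\<Sum>i<n. Db (snd p) - \<Delta> (snd p) (fst p i)))"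
  have fQ[measurable]: "f \<in> borel_measurable Q" unfolding f_def Q_def Sn_def by measurable
  have fJ: "f \<in> borel_measurable J" using fQ by (simp only: mJQ)
  have Dbb: "\<bar>Db u\<bar> \<le> B" if "u \<in> space V" for u
  proof -
    have "\<bar>Db u\<bar> \<le> (\<integral>z. \<bar>\<Delta> u z\<bar> \<partial>\<mu>)" unfolding Db_def by (rule integral_abs_bound)
    also have "\<dots> \<le> (\<integral>z. B \<partial>\<mu>)"
      by (rule integral_mono) (use \<Delta>b that B in \<open>auto intro!: \<mu>.integrable_const_bound[where B=B]\<close>)
    finally show ?thesis by (simp add: \<mu>.prob_space)
  qed
  have fb: "\<bar>f p\<bar> \<le> 2 * B" if "p \<in> space Q" for p
  proof -
    have pQ: "fst p \<in> space Sn" "snd p \<in> space V" using that by (auto simp: Q_def space_pair_measure)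
    have sp: "snd p \<in> space V" "\<And>i. i < n \<Longrightarrow> fst p i \<in> space \<mu>"
      using pQ unfolding Sn_def space_PiM by (auto intro: PiE_mem)
    have "\<bar>\<Sum>i<n. Db (snd p) - \<Delta> (snd p) (fst p i)\<bar> \<le> (\<Sum>i<n. \<bar>Db (snd p) - \<Delta> (snd p) (fst p i)\<bar>)"
      by (rule sum_abs)
    also have "\<dots> \<le> (\<Sum>i<n. 2 * B)"
    proof (rule sum_mono)
      fix i assume "i \<in> {..<n}"
      then show "\<bar>Db (snd p) - \<Delta> (snd p) (fst p i)\<bar> \<le> 2 * B"
        using Dbb[OF sp(1)] \<Delta>b[OF sp(1) sp(2)[of i]] by auto
    qed
    finally have "\<bar>\<Sum>i<n. Db (snd p) - \<Delta> (snd p) (fst p i)\<bar> \<le> real n * (2 * B)" by simp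
    then show ?thesis using n by (simp add: f_def abs_mult field_simps)
  qed
  have fint: "integrable J f"
    by (rule J.integrable_const_bound[where B="2 * B"]) (use fb fJ in \<open>auto simp: sets_eq_imp_space_eq[OF setsJ']\<close>)
  have KL0: "0 \<le> KL"
  proof -
    have e1: "(\<integral>\<^sup>+x. ennreal (exp ((\<lambda>_. 0::real) x)) \<partial>Q) \<le> ennreal 1"
      using prob_space.emeasure_space_1[OF Q] by simp
    have "integral\<^sup>L J (\<lambda>_. 0::real) \<le> KL_divergence (exp 1) Q J + 1 - 1"
      by (rule DV_aux[OF Q J.prob_space_axioms setsJ' ac' int' _ _ e1]) simp_all
    then show ?thesis by (simp add: KL_def)
  qed
  then show "0 \<le> KL_divergence (exp 1) ((\<Pi>\<^sub>M i\<in>{..<n}. \<mu>) \<Otimes>\<^sub>M V) J" by (simp add: KL_def Q_def Sn_def)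
  define c where "c = B\<^sup>2 / (2 * real n)"
  have c: "0 < c" using B n by (simp add: c_def)
  have main: "l * integral\<^sup>L J f \<le> KL + l\<^sup>2 * c" if l: "0 < l" for l
  proof -
    define g where "g = (\<lambda>p. l * f p - l\<^sup>2 * c)"
    have gQ: "g \<in> borel_measurable Q" unfolding g_def by measurable
    have gint: "integrable J g" unfolding g_def using fint by simp
    have inner: "(\<integral>\<^sup>+s. ennreal (exp (g (s, u))) \<partial>Sn) \<le> 1" if u: "u \<in> space V" for u
    proof -
      define G where "G = (\<lambda>s. l * ((1 / real n) * (\<Sum>i<n. (\<integral>z. \<Delta> u z \<partial>\<mu>) - \<Delta> u (s i))))"
      have \<Delta>u[measurable]: "\<Delta> u \<in> borel_measurable \<mu>" using measurable_Pair2[OF \<Delta>m u] by simp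
      have Gm: "G \<in> borel_measurable Sn" unfolding G_def Sn_def by measurable
      have "(\<integral>\<^sup>+s. ennreal (exp (g (s, u))) \<partial>Sn) = (\<integral>\<^sup>+s. ennreal (exp (G s)) * ennreal (exp (- (l\<^sup>2 * c))) \<partial>Sn)"
      proof (rule nn_integral_cong)
        fix s
        have "g (s, u) = G s + (- (l\<^sup>2 * c))" by (simp add: g_def f_def Db_def G_def)
        then have "exp (g (s, u)) = exp (G s) * exp (- (l\<^sup>2 * c))" by (simp only: exp_add)
        then show "ennreal (exp (g (s, u))) = ennreal (exp (G s)) * ennreal (exp (- (l\<^sup>2 * c)))"
          by (simp add: ennreal_mult)
      qed
      also have "\<dots> = (\<integral>\<^sup>+s. ennreal (exp (G s)) \<partial>Sn) * ennreal (exp (- (l\<^sup>2 * c)))"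
        by (rule nn_integral_multc) (use Gm in simp)
      also have "\<dots> \<le> ennreal (exp (l\<^sup>2 * B\<^sup>2 / (2 * real n))) * ennreal (exp (- (l\<^sup>2 * c)))"
        unfolding Sn_def G_def
        by (intro mult_right_mono hoeff_prod[OF \<mu> \<Delta>u _ l n]) (use u \<Delta>b in auto)
      also have "l\<^sup>2 * B\<^sup>2 / (2 * real n) = l\<^sup>2 * c" by (simp add: c_def)
      also have "ennreal (exp (l\<^sup>2 * c)) * ennreal (exp (- (l\<^sup>2 * c))) = ennreal (exp (l\<^sup>2 * c) * exp (- (l\<^sup>2 * c)))"
        by (simp add: ennreal_mult)
      also have "exp (l\<^sup>2 * c) * exp (- (l\<^sup>2 * c)) = 1" by (rule exp_minus_inverse)
      finally show ?thesis by simp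
    qed
    have "(\<integral>\<^sup>+p. ennreal (exp (g p)) \<partial>Q) = (\<integral>\<^sup>+u. (\<integral>\<^sup>+s. ennreal (exp (g (s, u))) \<partial>Sn) \<partial>V)"
      unfolding Q_def by (rule SV.nn_integral_snd[symmetric]) (use gQ in \<open>simp add: Q_def\<close>)
    also have "\<dots> \<le> (\<integral>\<^sup>+u. 1 \<partial>V)"
      by (rule nn_integral_mono) (use inner in auto)
    also have "\<dots> = ennreal 1" by (simp add: V.emeasure_space_1)
    finally have "(\<integral>\<^sup>+p. ennreal (exp (g p)) \<partial>Q) \<le> ennreal 1" .
    from DV_aux[OF Q J.prob_space_axioms setsJ' ac' int' gQ gint this]
    have "integral\<^sup>L J g \<le> KL" by (simp add: KL_def)
    moreover have "integral\<^sup>L J g = l * integral\<^sup>L J f - l\<^sup>2 * c"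
      unfolding g_def using fint by (simp add: J.prob_space)
    ultimately show ?thesis by simp
  qed
  have "integral\<^sup>L J f \<le> 2 * sqrt (KL * c)" by (rule opt_lambda[OF main KL0 c])
  also have "2 * sqrt (KL * c) = B * sqrt 2 * sqrt KL / sqrt (real n)"
  proof -
    have "2 * sqrt (KL * c) = sqrt (4 * (KL * c))" by (simp add: real_sqrt_mult)
    also have "4 * (KL * c) = (B * sqrt 2 * sqrt KL / sqrt (real n))\<^sup>2"
      using KL0 B n by (simp add: c_def power_mult_distrib power_divide)
    also have "sqrt ((B * sqrt 2 * sqrt KL / sqrt (real n))\<^sup>2) = B * sqrt 2 * sqrt KL / sqrt (real n)"
      using KL0 B n by (intro real_sqrt_abs[THEN trans] abs_of_nonneg) auto
    finally show ?thesis .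
  qed
  finally have "integral\<^sup>L J f \<le> B * sqrt 2 * sqrt KL / sqrt (real n)" .
  then show "(\<integral>p. (1 / real n) * (\<Sum>i<n. (\<integral>z. \<Delta> (snd p) z \<partial>\<mu>) - \<Delta> (snd p) (fst p i)) \<partial>J)
          \<le> B * sqrt 2 * sqrt (KL_divergence (exp 1) ((\<Pi>\<^sub>M i\<in>{..<n}. \<mu>) \<Otimes>\<^sub>M V) J) / sqrt (real n)"
    unfolding f_def Db_def KL_def Q_def Sn_def .
qed

lemma distr_inner:
  fixes Sn :: "'a measure" and W :: "'b measure" and Ks :: "'b measure"
  assumes Kp: "prob_space Ks" and Ksets: "sets Ks = sets W" and s: "s \<in> space Sn"
  shows "distr (Ks \<bind> (\<lambda>w. return (Sn \<Otimes>\<^sub>M W) (s, w))) Sn fst = return Sn s"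
proof -
  interpret Ks: prob_space Ks by fact
  have A: "Ks \<bind> (\<lambda>w. distr (return (Sn \<Otimes>\<^sub>M W) (s, w)) Sn fst) = Ks \<bind> (\<lambda>w. return Sn s)"
  proof (rule bind_cong_All, intro ballI)
    fix w assume "w \<in> space Ks"
    then have "(s, w) \<in> space (Sn \<Otimes>\<^sub>M W)" using s sets_eq_imp_space_eq[OF Ksets] by (simp add: space_pair_measure)
    then show "distr (return (Sn \<Otimes>\<^sub>M W) (s, w)) Sn fst = return Sn s"
      using distr_return[OF measurable_fst, of "(s, w)" Sn W] by simp
  qed
  have B: "Ks \<bind> (\<lambda>w. return Sn s) = return Sn s"
    by (rule bind_const'[OF Kp]) (simp add: s prob_space_imp_subprob_space prob_space_return)
  have "(\<lambda>w. (s, w)) \<in> measurable Ks (Sn \<Otimes>\<^sub>M W)"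
    using s by (simp add: measurable_cong_sets[OF Ksets refl])
  then have r: "(\<lambda>w. return (Sn \<Otimes>\<^sub>M W) (s, w)) \<in> measurable Ks (subprob_algebra (Sn \<Otimes>\<^sub>M W))"
    by (rule measurable_compose) (rule return_measurable)
  have C: "distr (Ks \<bind> (\<lambda>w. return (Sn \<Otimes>\<^sub>M W) (s, w))) Sn fst = Ks \<bind> (\<lambda>w. distr (return (Sn \<Otimes>\<^sub>M W) (s, w)) Sn fst)"
    by (rule distr_bind[OF r Ks.not_empty measurable_fst])
  show ?thesis using A B C by simp
qed

lemma P_facts:
  fixes Sn :: "'a measure" and W :: "'b measure"
  assumes Sn: "prob_space Sn" and K: "K \<in> measurable Sn (prob_algebra W)"
  defines "P \<equiv> Sn \<bind> (\<lambda>s. K s \<bind> (\<lambda>w. return (Sn \<Otimes>\<^sub>M W) (s, w)))"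
  shows "prob_space P" "sets P = sets (Sn \<Otimes>\<^sub>M W)" "distr P Sn fst = Sn"
proof -
  interpret Sn: prob_space Sn by fact
  define Ker where "Ker = (\<lambda>s. K s \<bind> (\<lambda>w. return (Sn \<Otimes>\<^sub>M W) (s, w)))"
  have ret: "(\<lambda>(s, w). return (Sn \<Otimes>\<^sub>M W) (s, w)) \<in> (Sn \<Otimes>\<^sub>M W) \<rightarrow>\<^sub>M prob_algebra (Sn \<Otimes>\<^sub>M W)"
    using measurable_return_prob_space[of "Sn \<Otimes>\<^sub>M W"] by (simp add: case_prod_beta')
  have Kerm: "Ker \<in> Sn \<rightarrow>\<^sub>M prob_algebra (Sn \<Otimes>\<^sub>M W)"
    unfolding Ker_def by (rule measurable_bind_prob_space2[OF K ret])
  have Sn_in: "Sn \<in> space (prob_algebra Sn)" by (simp add: space_prob_algebra Sn.prob_space_axioms)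
  show "prob_space P" unfolding P_def Ker_def[symmetric] by (rule prob_space_bind'[OF Sn_in Kerm])
  show "sets P = sets (Sn \<Otimes>\<^sub>M W)" unfolding P_def Ker_def[symmetric] by (rule sets_bind'[OF Sn_in Kerm])
  have Kers: "Ker \<in> measurable Sn (subprob_algebra (Sn \<Otimes>\<^sub>M W))" by (rule measurable_prob_algebraD[OF Kerm])
  have ne: "space Sn \<noteq> {}" by (rule Sn.not_empty)
  have A: "distr P Sn fst = Sn \<bind> (\<lambda>s. distr (Ker s) Sn fst)"
    unfolding P_def Ker_def[symmetric] by (rule distr_bind[OF Kers ne measurable_fst])
  have B: "Sn \<bind> (\<lambda>s. distr (Ker s) Sn fst) = Sn \<bind> return Sn"
  proof (rule bind_cong_All, intro ballI)
    fix s assume s: "s \<in> space Sn"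
    have Ks: "K s \<in> space (prob_algebra W)" using K s by (rule measurable_space)
    then have Kp: "prob_space (K s)" and Ksets: "sets (K s) = sets W" by (auto simp: space_prob_algebra)
    show "distr (Ker s) Sn fst = return Sn s" unfolding Ker_def by (rule distr_inner[OF Kp Ksets s])
  qed
  have C: "Sn \<bind> return Sn = Sn" by (rule bind_return'') simp
  show "distr P Sn fst = Sn" using A B C by simp
qed

definition extw :: "nat \<Rightarrow> nat \<Rightarrow> (nat \<Rightarrow> nat \<Rightarrow> nat \<Rightarrow> real) \<Rightarrow> (nat \<Rightarrow> nat \<Rightarrow> nat \<Rightarrow> real) \<Rightarrow> (nat \<Rightarrow> nat \<Rightarrow> nat \<Rightarrow> real)" where
  "extw d k M u = (\<lambda>j\<in>{1..d}. if j \<le> k then u j else M j)"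

lemma space_Wspace: "space (Wspace \<delta> M \<alpha> k) = (\<Pi>\<^sub>E j\<in>{1..k}. Bset \<delta> M \<alpha> j)"
  by (simp add: Wspace_def space_PiM space_restrict_space)

lemma M_in_Bset:
  assumes "M j \<in> mats (\<delta> j) (\<delta> (j - 1))" "0 < spec_norm (\<delta> j) (\<delta> (j - 1)) (M j)" "0 < \<alpha> j"
  shows "M j \<in> Bset \<delta> M \<alpha> j"
  using assms by (simp add: Bset_def spec_norm_zero')

lemma extw_space:
  assumes MB: "\<And>j. j \<in> {1..d} \<Longrightarrow> M j \<in> Bset \<delta> M \<alpha> j" and k: "k \<le> kk"
    and u: "u \<in> space (Wspace \<delta> M \<alpha> kk)"
  shows "extw d k M u \<in> space (Wspace \<delta> M \<alpha> d)"
  unfolding space_Wspace extw_def restrict_PiE_iff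
proof
  fix j assume j: "j \<in> {1..d}"
  show "(if j \<le> k then u j else M j) \<in> Bset \<delta> M \<alpha> j"
  proof (cases "j \<le> k")
    case True
    then have "j \<in> {1..kk}" using j k by auto
    then show ?thesis using u True by (auto simp: space_Wspace)
  qed (use MB j in auto)
qed

lemma extw_meas:
  assumes MB: "\<And>j. j \<in> {1..d} \<Longrightarrow> M j \<in> Bset \<delta> M \<alpha> j" and k: "k \<le> kk"
  shows "extw d k M \<in> measurable (Wspace \<delta> M \<alpha> kk) (Wspace \<delta> M \<alpha> d)"
  unfolding extw_def Wspace_def
proof (rule measurable_restrict)
  fix j assume j: "j \<in> {1..d}"
  show "(\<lambda>u. if j \<le> k then u j else M j) \<in> measurable (\<Pi>\<^sub>M j\<in>{1..kk}. restrict_space borel (Bset \<delta> M \<alpha> j)) (restrict_space borel (Bset \<delta> M \<alpha> j))"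
  proof (cases "j \<le> k")
    case True
    then have "j \<in> {1..kk}" using j k by auto
    then show ?thesis using True by simp
  next
    case False
    have "M j \<in> space (restrict_space borel (Bset \<delta> M \<alpha> j))" using MB[OF j] by (simp add: space_restrict_space)
    then show ?thesis using False by simp
  qed
qed

lemma extw_restrict:
  assumes "k \<le> kk" shows "extw d k M (restrict u {1..kk}) = extw d k M u"
  using assms unfolding extw_def by (intro ext) auto

lemma extw_full:
  assumes "w \<in> space (Wspace \<delta> M \<alpha> d)" shows "extw d d M w = w"
proof -
  have "w \<in> extensional {1..d}" using assms by (simp add: space_Wspace PiE_def)
  then show ?thesis unfolding extw_def by (intro ext) (auto simp: extensional_def)
qed

lemma extw_diff_only:
  assumes "i \<noteq> k" shows "extw d k M u i = extw d (k - 1) M u i"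
  using assms unfolding extw_def by auto

lemma telescope: fixes d :: nat shows "(\<Sum>k\<in>{1..d}. (a k - a (k - 1) :: real)) = a d - a 0"
proof (induction d)
  case (Suc d)
  have "(\<Sum>k\<in>{1..Suc d}. a k - a (k - 1)) = (\<Sum>k\<in>{1..d}. a k - a (k - 1)) + (a (Suc d) - a d)"
    by (subst sum.cl_ivl_Suc) auto
  then show ?case using Suc by simp
qed simp

lemma delta_bound:
  fixes d m :: nat and \<delta> :: "nat \<Rightarrow> nat" and R L :: real
    and M :: "nat \<Rightarrow> nat \<Rightarrow> nat \<Rightarrow> real" and \<alpha> :: "nat \<Rightarrow> real"
    and \<phi> :: "nat \<Rightarrow> (nat \<Rightarrow> real) \<Rightarrow> (nat \<Rightarrow> real)" and \<phi>o :: "(nat \<Rightarrow> real) \<Rightarrow> (nat \<Rightarrow> real)"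
    and ell :: "(nat \<Rightarrow> nat \<Rightarrow> nat \<Rightarrow> real) \<Rightarrow> ((nat \<Rightarrow> real) \<times> 'y) \<Rightarrow> real"
    and Zsp :: "((nat \<Rightarrow> real) \<times> 'y) measure"
  assumes d: "2 \<le> d" and \<delta>0: "\<delta> 0 = m"
    and M: "\<forall>j\<in>{1..d}. M j \<in> mats (\<delta> j) (\<delta> (j - 1)) \<and> 0 < spec_norm (\<delta> j) (\<delta> (j - 1)) (M j)"
    and \<alpha>: "\<forall>j\<in>{1..d}. 0 < \<alpha> j"
    and \<phi>_dim: "\<forall>j\<in>{1..<d}. \<forall>u\<in>vecs (\<delta> j). \<phi> (\<delta> j) u \<in> vecs (\<delta> j)"
    and \<phi>_lip: "\<forall>j\<in>{1..<d}. \<forall>u\<in>vecs (\<delta> j). \<forall>v\<in>vecs (\<delta> j).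
                   vnorm (\<delta> j) (\<phi> (\<delta> j) u - \<phi> (\<delta> j) v) \<le> vnorm (\<delta> j) (u - v)"
    and \<phi>_0: "\<forall>j\<in>{1..<d}. \<phi> (\<delta> j) (\<lambda>_. 0) = (\<lambda>_. 0)"
    and \<phi>o: "\<phi>o = id \<or> \<phi>o = softmax (\<delta> d)"
    and L: "0 < L"
    and ell_lip: "\<forall>w\<in>space (Wspace \<delta> M \<alpha> d). \<forall>w'\<in>space (Wspace \<delta> M \<alpha> d). \<forall>z\<in>space Zsp.
                 \<bar>ell w z - ell w' z\<bar> \<le> L * vnorm (\<delta> d) (net d \<delta> \<phi> \<phi>o w (fst z) - net d \<delta> \<phi> \<phi>o w' (fst z))"
    and Zx: "\<And>z. z \<in> space Zsp \<Longrightarrow> fst z \<in> Xset m R"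
    and k: "k \<in> {1..d}" and u: "u \<in> space (Wspace \<delta> M \<alpha> k)" and z: "z \<in> space Zsp"
  shows "\<bar>ell (extw d k M u) z - ell (extw d (k - 1) M u) z\<bar>
          \<le> L * (\<Prod>j=1..d. spec_norm (\<delta> j) (\<delta> (j - 1)) (M j)) * R * beta \<alpha> k"
proof -
  define sn where "sn = (\<lambda>j A. spec_norm (\<delta> j) (\<delta> (j - 1)) A)"
  have MB: "\<And>j. j \<in> {1..d} \<Longrightarrow> M j \<in> Bset \<delta> M \<alpha> j" using M \<alpha> by (intro M_in_Bset) auto
  define w where "w = extw d k M u"
  define w' where "w' = extw d (k - 1) M u"
  have wW: "w \<in> space (Wspace \<delta> M \<alpha> d)" unfolding w_def by (rule extw_space[OF MB _ u]) auto
  have w'W: "w' \<in> space (Wspace \<delta> M \<alpha> d)" unfolding w'_def by (rule extw_space[OF MB _ u]) auto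
  define x where "x = fst z"
  have xR: "vnorm (\<delta> 0) x \<le> R" using Zx[OF z] by (simp add: x_def Xset_def \<delta>0)
  have ww: "w i = w' i" if "i \<noteq> k" for i unfolding w_def w'_def by (rule extw_diff_only[OF that])
  have k1: "1 \<le> k" "k \<le> d" using k by auto
  have nd: "vnorm (\<delta> d) (net d \<delta> \<phi> \<phi>o w x - net d \<delta> \<phi> \<phi>o w' x)
     \<le> vnorm (\<delta> 0) x * (\<Prod>i\<in>{1..d}-{k}. sn i (w i)) * sn k (w k - w' k)"
    unfolding sn_def by (rule net_diff[OF \<phi>_dim \<phi>_lip \<phi>_0 ww k1 d \<phi>o])
  have uB: "u i \<in> Bset \<delta> M \<alpha> i" if "i \<in> {1..k}" for i using u that by (auto simp: space_Wspace)
  have wk: "w k - w' k = u k - M k" using k by (auto simp: w_def w'_def extw_def)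
  have snk: "sn k (w k - w' k) \<le> \<alpha> k * sn k (M k)"
    using uB[of k] k unfolding wk by (simp add: Bset_def sn_def)
  define c where "c = (\<lambda>i. if i < k then 1 + \<alpha> i else (1::real))"
  have sni: "sn i (w i) \<le> c i * sn i (M i)" if i: "i \<in> {1..d} - {k}" for i
  proof (cases "i < k")
    case True
    then have wi: "w i = u i" using i by (simp add: w_def extw_def)
    have ui: "u i \<in> Bset \<delta> M \<alpha> i" using True i by (intro uB) auto
    have "sn i (u i) = sn i (\<lambda>a b. (u i - M i) a b + M i a b)" by simp
    also have "\<dots> \<le> sn i (u i - M i) + sn i (M i)" unfolding sn_def by (rule spec_norm_add)
    also have "\<dots> \<le> \<alpha> i * sn i (M i) + sn i (M i)" using ui by (simp add: Bset_def sn_def)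
    finally show ?thesis using True wi by (simp add: c_def algebra_simps)
  next
    case False
    then have "w i = M i" using i by (auto simp: w_def extw_def)
    then show ?thesis using False by (simp add: c_def)
  qed
  have sn0: "0 \<le> sn i A" for i A by (simp add: sn_def spec_norm_nonneg)
  have c0: "0 \<le> c i" if "i \<in> {1..d}" for i using \<alpha> that by (simp add: c_def less_imp_le add_nonneg_nonneg)
  have P1: "(\<Prod>i\<in>{1..d}-{k}. sn i (w i)) \<le> (\<Prod>i\<in>{1..d}-{k}. c i * sn i (M i))"
    by (rule prod_mono) (use sni sn0 in auto)
  have P2: "(\<Prod>i\<in>{1..d}-{k}. c i * sn i (M i)) = (\<Prod>i\<in>{1..d}-{k}. c i) * (\<Prod>i\<in>{1..d}-{k}. sn i (M i))" by (rule prod.distrib)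
  have P3: "(\<Prod>i\<in>{1..d}-{k}. c i) \<le> exp (\<Sum>i\<in>{1..<k}. \<alpha> i)"
  proof -
    have "(\<Prod>i\<in>{1..d}-{k}. c i) \<le> (\<Prod>i\<in>{1..d}-{k}. exp (if i < k then \<alpha> i else 0))"
    proof (rule prod_mono)
      fix i assume "i \<in> {1..d} - {k}"
      then show "0 \<le> c i \<and> c i \<le> exp (if i < k then \<alpha> i else 0)"
        using c0[of i] by (auto simp: c_def add.commute exp_ge_add_one_self)
    qed
    also have "\<dots> = exp (\<Sum>i\<in>{1..d}-{k}. if i < k then \<alpha> i else 0)" by (simp add: exp_sum)
    also have "(\<Sum>i\<in>{1..d}-{k}. if i < k then \<alpha> i else 0) = (\<Sum>i\<in>{i\<in>{1..d}-{k}. i < k}. \<alpha> i)"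
      by (rule sum.inter_filter[symmetric]) simp
    also have "{i\<in>{1..d}-{k}. i < k} = {1..<k}" using k by auto
    finally show ?thesis .
  qed
  have Pm: "(\<Prod>i\<in>{1..d}. sn i (M i)) = sn k (M k) * (\<Prod>i\<in>{1..d}-{k}. sn i (M i))"
    using k by (subst prod.remove) auto
  define E where "E = exp (\<Sum>i\<in>{1..<k}. \<alpha> i)"
  define P' where "P' = (\<Prod>i\<in>{1..d}-{k}. sn i (M i))"
  have P'0: "0 \<le> P'" unfolding P'_def by (rule prod_nonneg) (use sn0 in auto)
  have Pc0: "0 \<le> (\<Prod>i\<in>{1..d}-{k}. c i)" by (rule prod_nonneg) (use c0 in auto)
  have prodb: "(\<Prod>i\<in>{1..d}-{k}. sn i (w i)) \<le> E * P'"
  proof -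
    have "(\<Prod>i\<in>{1..d}-{k}. c i) * P' \<le> E * P'"
      using P3 P'0
      by (intro mult_right_mono) (simp_all add: E_def)
    then show ?thesis using P1 P2
      by (simp add: P'_def)
  qed
  have prod0: "0 \<le> (\<Prod>i\<in>{1..d}-{k}. sn i (w i))" by (rule prod_nonneg) (use sn0 in auto)
  have "\<bar>ell w z - ell w' z\<bar> \<le> L * vnorm (\<delta> d) (net d \<delta> \<phi> \<phi>o w x - net d \<delta> \<phi> \<phi>o w' x)"
    using ell_lip wW w'W z by (auto simp: x_def)
  also have "\<dots> \<le> L * (vnorm (\<delta> 0) x * (\<Prod>i\<in>{1..d}-{k}. sn i (w i)) * sn k (w k - w' k))"
    using nd L by (intro mult_left_mono) auto
  also have "\<dots> \<le> L * (R * (E * P') * (\<alpha> k * sn k (M k)))"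
  proof -
    have R0: "0 \<le> R" using xR vnorm_nonneg[of "\<delta> 0" x] by linarith
    have a: "vnorm (\<delta> 0) x * (\<Prod>i\<in>{1..d}-{k}. sn i (w i)) \<le> R * (E * P')"
      by (rule mult_mono[OF xR prodb R0 prod0])
    have E0: "0 \<le> E" by (simp add: E_def)
    have b: "vnorm (\<delta> 0) x * (\<Prod>i\<in>{1..d}-{k}. sn i (w i)) * sn k (w k - w' k) \<le> R * (E * P') * (\<alpha> k * sn k (M k))"
      by (rule mult_mono[OF a snk]) (use R0 E0 P'0 sn0 in auto)
    show ?thesis using L b by (intro mult_left_mono) auto
  qed
  also have "\<dots> = L * (\<Prod>j=1..d. spec_norm (\<delta> j) (\<delta> (j - 1)) (M j)) * R * beta \<alpha> k"
  proof -
    have "(\<Prod>j=1..d. spec_norm (\<delta> j) (\<delta> (j - 1)) (M j)) = sn k (M k) * P'" using Pm by (simp add: sn_def P'_def)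
    then show ?thesis by (simp add: beta_def E_def mult_ac)
  qed
  finally show ?thesis by (simp add: w_def w'_def)
qed

theorem theorem1:
  fixes d m n :: nat
    and \<delta> :: "nat \<Rightarrow> nat"
    and R L :: real
    and M :: "nat \<Rightarrow> nat \<Rightarrow> nat \<Rightarrow> real"
    and \<alpha> :: "nat \<Rightarrow> real"
    and \<phi> :: "nat \<Rightarrow> (nat \<Rightarrow> real) \<Rightarrow> (nat \<Rightarrow> real)"
    and \<phi>o :: "(nat \<Rightarrow> real) \<Rightarrow> (nat \<Rightarrow> real)"
    and Y :: "'y measure"
    and \<mu> :: "((nat \<Rightarrow> real) \<times> 'y) measure"
    and ell :: "(nat \<Rightarrow> nat \<Rightarrow> nat \<Rightarrow> real) \<Rightarrow> ((nat \<Rightarrow> real) \<times> 'y) \<Rightarrow> real"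
    and K :: "(nat \<Rightarrow> (nat \<Rightarrow> real) \<times> 'y) \<Rightarrow> (nat \<Rightarrow> nat \<Rightarrow> nat \<Rightarrow> real) measure"
  defines "Zsp \<equiv> restrict_space borel (Xset m R) \<Otimes>\<^sub>M Y"
    and "W \<equiv> Wspace \<delta> M \<alpha> d"
    and "Sn \<equiv> (\<Pi>\<^sub>M i\<in>{..<n}. \<mu>)"
    and "P \<equiv> ((\<Pi>\<^sub>M i\<in>{..<n}. \<mu>) \<bind> (\<lambda>s. K s \<bind> (\<lambda>w. return ((\<Pi>\<^sub>M i\<in>{..<n}. \<mu>) \<Otimes>\<^sub>M Wspace \<delta> M \<alpha> d) (s, w))))"
    and "h \<equiv> net d \<delta> \<phi> \<phi>o"
    and "L\<mu> \<equiv> (\<lambda>w. \<integral>z. ell w z \<partial>\<mu>)"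
    and "LS \<equiv> (\<lambda>s w. (1 / real n) * (\<Sum>i<n. ell w (s i)))"
    and "Ik \<equiv> (\<lambda>k. prob_space.mutual_information ((\<Pi>\<^sub>M i\<in>{..<n}. \<mu>) \<bind> (\<lambda>s. K s \<bind> (\<lambda>w. return ((\<Pi>\<^sub>M i\<in>{..<n}. \<mu>) \<Otimes>\<^sub>M Wspace \<delta> M \<alpha> d) (s, w)))) (exp 1) (\<Pi>\<^sub>M i\<in>{..<n}. \<mu>) (Wspace \<delta> M \<alpha> k)
                    fst (\<lambda>p. restrict (snd p) {1..k}))"
  assumes d: "2 \<le> d"
    and m: "0 < m" and \<delta>0: "\<delta> 0 = m" and \<delta>pos: "\<forall>j\<in>{1..d}. 0 < \<delta> j"
    and R: "0 < R"
    and M: "\<forall>j\<in>{1..d}. M j \<in> mats (\<delta> j) (\<delta> (j - 1)) \<and> 0 < spec_norm (\<delta> j) (\<delta> (j - 1)) (M j)"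
    and \<alpha>: "\<forall>j\<in>{1..d}. 0 < \<alpha> j"
    and \<phi>_dim: "\<forall>j\<in>{1..<d}. \<forall>u\<in>vecs (\<delta> j). \<phi> (\<delta> j) u \<in> vecs (\<delta> j)"
    and \<phi>_lip: "\<forall>j\<in>{1..<d}. \<forall>u\<in>vecs (\<delta> j). \<forall>v\<in>vecs (\<delta> j).
                   vnorm (\<delta> j) (\<phi> (\<delta> j) u - \<phi> (\<delta> j) v) \<le> vnorm (\<delta> j) (u - v)"
    and \<phi>_0: "\<forall>j\<in>{1..<d}. \<phi> (\<delta> j) (\<lambda>_. 0) = (\<lambda>_. 0)"
    and \<phi>o: "\<phi>o = id \<or> \<phi>o = softmax (\<delta> d)"
    and \<mu>: "prob_space \<mu>" "sets \<mu> = sets Zsp"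
    and ell_meas: "(\<lambda>(w, z). ell w z) \<in> borel_measurable (W \<Otimes>\<^sub>M Zsp)"
    and ell_nonneg: "\<forall>w\<in>space W. \<forall>z\<in>space Zsp. 0 \<le> ell w z"
    and L: "0 < L"
    and ell_lip: "\<forall>w\<in>space W. \<forall>w'\<in>space W. \<forall>z\<in>space Zsp.
                 \<bar>ell w z - ell w' z\<bar> \<le> L * vnorm (\<delta> d) (h w (fst z) - h w' (fst z))"
    and n: "1 \<le> n"
    and K: "K \<in> measurable Sn (prob_algebra W)"
    and MI_finite: "\<forall>k\<in>{1..d}.
        finite_KL (distr P Sn fst \<Otimes>\<^sub>M distr P (Wspace \<delta> M \<alpha> k) (\<lambda>p. restrict (snd p) {1..k}))
          (distr P (Sn \<Otimes>\<^sub>M Wspace \<delta> M \<alpha> k) (\<lambda>p. (fst p, restrict (snd p) {1..k})))"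
  shows "(\<integral>p. L\<mu> (snd p) - LS (fst p) (snd p) \<partial>P)
           \<le> L * (\<Prod>j=1..d. spec_norm (\<delta> j) (\<delta> (j - 1)) (M j)) * R * sqrt 2 / sqrt (real n)
              * (\<Sum>k=1..d. beta \<alpha> k * sqrt (Ik k))"
proof -
  interpret \<mu>: prob_space \<mu> by (rule \<mu>(1))
  have Zx: "fst z \<in> Xset m R" if "z \<in> space Zsp" for z
    using that by (auto simp: Zsp_def space_pair_measure space_restrict_space)
  have sp\<mu>: "space \<mu> = space Zsp" by (rule sets_eq_imp_space_eq[OF \<mu>(2)])
  have MB: "\<And>j. j \<in> {1..d} \<Longrightarrow> M j \<in> Bset \<delta> M \<alpha> j" using M \<alpha> by (intro M_in_Bset) auto
  have Sn_ps: "prob_space Sn" unfolding Sn_def by (intro prob_space_PiM) (simp add: \<mu>.prob_space_axioms)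
  interpret Sn: prob_space Sn by (rule Sn_ps)
  have Peq: "P = Sn \<bind> (\<lambda>s. K s \<bind> (\<lambda>w. return (Sn \<Otimes>\<^sub>M W) (s, w)))" unfolding P_def Sn_def W_def ..
  have P_ps: "prob_space P" and setsP: "sets P = sets (Sn \<Otimes>\<^sub>M W)" and margP: "distr P Sn fst = Sn"
    using P_facts[OF Sn_ps K] unfolding Peq[symmetric] by auto
  interpret P: prob_space P by (rule P_ps)
  have mP: "measurable P N = measurable (Sn \<Otimes>\<^sub>M W) N" for N :: "'c measure" by (rule measurable_cong_sets[OF setsP refl])
  have spP: "space P = space (Sn \<Otimes>\<^sub>M W)" by (rule sets_eq_imp_space_eq[OF setsP])
  define Mp where "Mp = (\<Prod>j=1..d. spec_norm (\<delta> j) (\<delta> (j - 1)) (M j))"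
  define Bk where "Bk = (\<lambda>k. L * Mp * R * beta \<alpha> k)"
  define \<Delta> where "\<Delta> = (\<lambda>k u z. ell (extw d k M u) z - ell (extw d (k - 1) M u) z)"
  define fk where "fk = (\<lambda>k s u. (1 / real n) * (\<Sum>i<n. (\<integral>z. \<Delta> k u z \<partial>\<mu>) - \<Delta> k u (s i)))"
  have perk: "0 \<le> Ik k \<and> integrable P (\<lambda>p. fk k (fst p) (restrict (snd p) {1..k}))
     \<and> (\<integral>p. fk k (fst p) (restrict (snd p) {1..k}) \<partial>P) \<le> Bk k * sqrt 2 * sqrt (Ik k) / sqrt (real n)"
    if k: "k \<in> {1..d}" for k
  proof -
    define Wk where "Wk = Wspace \<delta> M \<alpha> k"
    have rkm: "(\<lambda>p. restrict (snd p) {1..k}) \<in> measurable P Wk"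
      unfolding mP W_def Wspace_def Wk_def using k
      by (intro measurable_compose[OF measurable_snd measurable_restrict_subset]) auto
    have fstm: "fst \<in> measurable P Sn" unfolding mP by (rule measurable_fst)
    have pairm: "(\<lambda>p. (fst p, restrict (snd p) {1..k})) \<in> measurable P (Sn \<Otimes>\<^sub>M Wk)"
      using rkm fstm by (intro measurable_Pair) auto
    define V where "V = distr P Wk (\<lambda>p. restrict (snd p) {1..k})"
    define J where "J = distr P (Sn \<Otimes>\<^sub>M Wk) (\<lambda>p. (fst p, restrict (snd p) {1..k}))"
    have V_ps: "prob_space V" unfolding V_def by (rule P.prob_space_distr[OF rkm])
    have J_ps: "prob_space J" unfolding J_def by (rule P.prob_space_distr[OF pairm])
    have setsV: "sets V = sets Wk" by (simp add: V_def)
    have spV: "space V = space Wk" by (simp add: V_def)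
    have setsSV: "sets (Sn \<Otimes>\<^sub>M V) = sets (Sn \<Otimes>\<^sub>M Wk)" by (rule sets_pair_measure_cong[OF refl setsV])
    have setsJ: "sets J = sets ((\<Pi>\<^sub>M i\<in>{..<n}. \<mu>) \<Otimes>\<^sub>M V)" using setsSV by (simp add: J_def Sn_def)
    have fKL: "finite_KL (Sn \<Otimes>\<^sub>M V) J" using MI_finite k margP by (simp add: V_def J_def Wk_def)
    have ac: "absolutely_continuous ((\<Pi>\<^sub>M i\<in>{..<n}. \<mu>) \<Otimes>\<^sub>M V) J" using fKL by (simp add: finite_KL_def Sn_def)
    have int: "integrable J (entropy_density (exp 1) ((\<Pi>\<^sub>M i\<in>{..<n}. \<mu>) \<Otimes>\<^sub>M V) J)" using fKL by (simp add: finite_KL_def Sn_def)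
    have Ikeq: "Ik k = KL_divergence (exp 1) ((\<Pi>\<^sub>M i\<in>{..<n}. \<mu>) \<Otimes>\<^sub>M V) J"
    proof -
      have "Ik k = prob_space.mutual_information P (exp 1) Sn (Wspace \<delta> M \<alpha> k) fst (\<lambda>p. restrict (snd p) {1..k})"
        by (simp only: Ik_def P_def Sn_def)
      also have "\<dots> = KL_divergence (exp 1) (Sn \<Otimes>\<^sub>M V) J"
        unfolding P.mutual_information_def margP V_def J_def Wk_def ..
      finally show ?thesis by (simp add: Sn_def)
    qed
    have mSZ: "measurable (Wk \<Otimes>\<^sub>M \<mu>) N = measurable (Wk \<Otimes>\<^sub>M Zsp) N" for N :: "'c measure"
      by (rule measurable_cong_sets[OF sets_pair_measure_cong[OF refl \<mu>(2)] refl])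
    have ellk: "(\<lambda>p. ell (extw d j M (fst p)) (snd p)) \<in> borel_measurable (Wk \<Otimes>\<^sub>M Zsp)" if "j \<le> k" for j
    proof -
      have e1: "(\<lambda>p. (extw d j M (fst p), snd p)) \<in> measurable (Wk \<Otimes>\<^sub>M Zsp) (W \<Otimes>\<^sub>M Zsp)"
        using extw_meas[OF MB that] unfolding W_def Wk_def
        by (intro measurable_Pair measurable_compose[OF measurable_fst]) auto
      show ?thesis using measurable_compose[OF e1 ell_meas] by simp
    qed
    have \<Delta>m0: "(\<lambda>p. \<Delta> k (fst p) (snd p)) \<in> borel_measurable (Wk \<Otimes>\<^sub>M \<mu>)"
      unfolding mSZ \<Delta>_def using ellk[of k] ellk[of "k - 1"] by (intro borel_measurable_diff) auto
    have \<Delta>m: "(\<lambda>(u, z). \<Delta> k u z) \<in> borel_measurable (V \<Otimes>\<^sub>M \<mu>)"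
    proof -
      have eq: "measurable (V \<Otimes>\<^sub>M \<mu>) borel = measurable (Wk \<Otimes>\<^sub>M \<mu>) borel"
        by (rule measurable_cong_sets[OF sets_pair_measure_cong[OF setsV refl] refl])
      show ?thesis unfolding case_prod_beta' eq by (rule \<Delta>m0)
    qed
    have \<Delta>b: "\<bar>\<Delta> k u z\<bar> \<le> Bk k" if "u \<in> space V" "z \<in> space \<mu>" for u z
      unfolding \<Delta>_def Bk_def Mp_def
      by (rule delta_bound[OF d \<delta>0 M \<alpha> \<phi>_dim \<phi>_lip \<phi>_0 \<phi>o L ell_lip[unfolded W_def h_def] Zx k])
         (use that in \<open>simp_all add: spV Wk_def sp\<mu>\<close>)
    have Bpos: "0 < Bk k"
    proof -
      have "0 < Mp" unfolding Mp_def using M by (intro prod_pos) auto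
      moreover have "0 < beta \<alpha> k" using \<alpha> k by (simp add: beta_def)
      ultimately show ?thesis using L R by (simp add: Bk_def)
    qed
    have npos: "0 < n" using n by simp
    note XR = XR_bound[OF \<mu>(1) V_ps J_ps setsJ ac int \<Delta>m \<Delta>b Bpos npos]
    have I0: "0 \<le> Ik k" using XR(1) Ikeq by simp
    define F where "F = (\<lambda>q. (1 / real n) * (\<Sum>i<n. (\<integral>z. \<Delta> k (snd q) z \<partial>\<mu>) - \<Delta> k (snd q) (fst q i)))"
    note [measurable] = \<Delta>m0
    have \<Delta>u: "\<Delta> k u \<in> borel_measurable \<mu>" if "u \<in> space Wk" for u
      using measurable_Pair2[OF \<Delta>m0 that] by simp
    have Dbm[measurable]: "(\<lambda>u. \<integral>z. \<Delta> k u z \<partial>\<mu>) \<in> borel_measurable Wk"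
      by (rule \<mu>.borel_measurable_lebesgue_integral) (use \<Delta>m0 in \<open>simp add: case_prod_beta'\<close>)
    have cm: "(\<lambda>q. \<Delta> k (snd q) (fst q i)) \<in> borel_measurable (Sn \<Otimes>\<^sub>M Wk)" if "i < n" for i
    proof -
      have "(\<lambda>q. (snd q, fst q i)) \<in> measurable (Sn \<Otimes>\<^sub>M Wk) (Wk \<Otimes>\<^sub>M \<mu>)"
        using that unfolding Sn_def
        by (intro measurable_Pair measurable_snd measurable_compose[OF measurable_fst measurable_component_singleton]) auto
      from measurable_compose[OF this \<Delta>m0] show ?thesis by simp
    qed
    have cm2: "(\<lambda>q. \<integral>z. \<Delta> k (snd q) z \<partial>\<mu>) \<in> borel_measurable (Sn \<Otimes>\<^sub>M Wk)"
      by (rule measurable_compose[OF measurable_snd Dbm])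
    have Fm: "F \<in> borel_measurable (Sn \<Otimes>\<^sub>M Wk)" unfolding F_def
      using cm cm2 by (intro borel_measurable_times borel_measurable_const borel_measurable_sum borel_measurable_diff) auto
    have Fb: "\<bar>F q\<bar> \<le> 2 * Bk k" if "q \<in> space (Sn \<Otimes>\<^sub>M Wk)" for q
    proof -
      have q: "fst q \<in> space Sn" "snd q \<in> space V" using that by (auto simp: space_pair_measure spV)
      have qi: "fst q i \<in> space \<mu>" if "i < n" for i
        using q(1) that unfolding Sn_def space_PiM by (auto intro: PiE_mem)
      have Db: "\<bar>\<integral>z. \<Delta> k (snd q) z \<partial>\<mu>\<bar> \<le> Bk k"
      proof -
        have "\<bar>\<integral>z. \<Delta> k (snd q) z \<partial>\<mu>\<bar> \<le> (\<integral>z. \<bar>\<Delta> k (snd q) z\<bar> \<partial>\<mu>)" by (rule integral_abs_bound)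
        also have "\<dots> \<le> (\<integral>z. Bk k \<partial>\<mu>)"
        proof (rule integral_mono)
          have m: "\<Delta> k (snd q) \<in> borel_measurable \<mu>" using q(2) by (intro \<Delta>u) (simp add: spV)
          show "integrable \<mu> (\<lambda>z. \<bar>\<Delta> k (snd q) z\<bar>)"
            by (rule \<mu>.integrable_const_bound[where B="Bk k"]) (use \<Delta>b q(2) m in auto)
        qed (use \<Delta>b q(2) in auto)
        finally show ?thesis by (simp add: \<mu>.prob_space)
      qed
      have "\<bar>\<Sum>i<n. (\<integral>z. \<Delta> k (snd q) z \<partial>\<mu>) - \<Delta> k (snd q) (fst q i)\<bar> \<le> (\<Sum>i<n. \<bar>(\<integral>z. \<Delta> k (snd q) z \<partial>\<mu>) - \<Delta> k (snd q) (fst q i)\<bar>)"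
        by (rule sum_abs)
      also have "\<dots> \<le> (\<Sum>i<n. 2 * Bk k)"
      proof (rule sum_mono)
        fix i assume "i \<in> {..<n}"
        then show "\<bar>(\<integral>z. \<Delta> k (snd q) z \<partial>\<mu>) - \<Delta> k (snd q) (fst q i)\<bar> \<le> 2 * Bk k"
          using Db \<Delta>b[OF q(2) qi[of i]] by auto
      qed
      finally have "\<bar>\<Sum>i<n. (\<integral>z. \<Delta> k (snd q) z \<partial>\<mu>) - \<Delta> k (snd q) (fst q i)\<bar> \<le> real n * (2 * Bk k)" by simp
      then show ?thesis using npos by (simp add: F_def abs_mult field_simps)
    qed
    interpret J: prob_space J by (rule J_ps)
    have spJ: "space J = space (Sn \<Otimes>\<^sub>M Wk)" by (simp add: J_def)
    have FJ: "integrable J F"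
      by (rule J.integrable_const_bound[where B="2 * Bk k"]) (use Fb Fm in \<open>auto simp: spJ J_def\<close>)
    have intP: "integrable P (\<lambda>p. F (fst p, restrict (snd p) {1..k}))"
      using FJ integrable_distr_eq[OF pairm Fm] by (simp add: J_def)
    have eqP: "(\<integral>p. F (fst p, restrict (snd p) {1..k}) \<partial>P) = integral\<^sup>L J F"
      unfolding J_def by (rule integral_distr[OF pairm Fm, symmetric])
    have fkF: "(\<lambda>p. fk k (fst p) (restrict (snd p) {1..k})) = (\<lambda>p. F (fst p, restrict (snd p) {1..k}))"
      by (simp add: fk_def F_def)
    have "integral\<^sup>L J F \<le> Bk k * sqrt 2 * sqrt (Ik k) / sqrt (real n)"
      using XR(2) Ikeq by (simp add: F_def)
    then show ?thesis unfolding fkF using I0 intP eqP by simp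
  qed
  have mZ: "measurable \<mu> N = measurable Zsp N" for N :: "'c measure" by (rule measurable_cong_sets[OF \<mu>(2) refl])
  have ellw: "ell w \<in> borel_measurable \<mu>" if "w \<in> space W" for w
    unfolding mZ using measurable_Pair2[OF ell_meas that] by simp
  have extW: "extw d j M u \<in> space W" if "j \<le> k" "u \<in> space (Wspace \<delta> M \<alpha> k)" for j k u
    unfolding W_def by (rule extw_space[OF MB that])
  have \<Delta>b_g: "\<bar>\<Delta> k u z\<bar> \<le> Bk k" if "k \<in> {1..d}" "u \<in> space (Wspace \<delta> M \<alpha> k)" "z \<in> space \<mu>" for k u z
    unfolding \<Delta>_def Bk_def Mp_def
    by (rule delta_bound[OF d \<delta>0 M \<alpha> \<phi>_dim \<phi>_lip \<phi>_0 \<phi>o L ell_lip[unfolded W_def h_def] Zx that(1,2)])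
       (use that in \<open>simp_all add: sp\<mu>\<close>)
  have \<Delta>m_g: "\<Delta> k u \<in> borel_measurable \<mu>" if "u \<in> space (Wspace \<delta> M \<alpha> k)" for k u
  proof -
    have "(\<lambda>z. ell (extw d k M u) z - ell (extw d (k - 1) M u) z) \<in> borel_measurable \<mu>"
      using ellw[OF extW[OF _ that, of k]] ellw[OF extW[OF _ that, of "k - 1"]] by (intro borel_measurable_diff) auto
    then show ?thesis by (simp add: \<Delta>_def)
  qed
  have \<Delta>int: "integrable \<mu> (\<Delta> k u)" if "k \<in> {1..d}" "u \<in> space (Wspace \<delta> M \<alpha> k)" for k u
    by (rule \<mu>.integrable_const_bound[where B="Bk k"]) (use \<Delta>b_g[OF that] \<Delta>m_g[OF that(2)] in auto)
  have rW: "restrict w {1..k} \<in> space (Wspace \<delta> M \<alpha> k)" if "w \<in> space W" "k \<le> d" for w k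
    using that unfolding W_def space_Wspace restrict_PiE_iff by (auto simp: PiE_iff)
  define w0 where "w0 = (\<lambda>j\<in>{1..d}. M j)"
  have w0e: "extw d 0 M u = w0" for u unfolding extw_def w0_def by (intro ext) auto
  have w0W: "w0 \<in> space W" unfolding W_def space_Wspace w0_def restrict_PiE_iff using MB by auto
  have decomp: "ell w z = ell w0 z + (\<Sum>k\<in>{1..d}. \<Delta> k (restrict w {1..k}) z)" if w: "w \<in> space W" for w z
  proof -
    have "(\<Sum>k\<in>{1..d}. \<Delta> k (restrict w {1..k}) z) = (\<Sum>k\<in>{1..d}. ell (extw d k M w) z - ell (extw d (k - 1) M w) z)"
      by (intro sum.cong refl) (simp only: \<Delta>_def extw_restrict[OF order_refl] extw_restrict[OF diff_le_self])
    also have "\<dots> = ell (extw d d M w) z - ell (extw d 0 M w) z"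
      by (rule telescope[where a="\<lambda>k. ell (extw d k M w) z"])
    also have "\<dots> = ell w z - ell w0 z" using extw_full w w0e unfolding W_def by simp
    finally show ?thesis by simp
  qed
  have Ik0: "0 \<le> Ik k" if "k \<in> {1..d}" for k using perk[OF that] by simp
  have rhs: "(\<Sum>k\<in>{1..d}. Bk k * sqrt 2 * sqrt (Ik k) / sqrt (real n))
      = L * (\<Prod>j=1..d. spec_norm (\<delta> j) (\<delta> (j - 1)) (M j)) * R * sqrt 2 / sqrt (real n)
              * (\<Sum>k=1..d. beta \<alpha> k * sqrt (Ik k))"
    unfolding sum_distrib_left by (intro sum.cong) (simp_all add: Bk_def Mp_def)
  have rhs0: "0 \<le> (\<Sum>k\<in>{1..d}. Bk k * sqrt 2 * sqrt (Ik k) / sqrt (real n))"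
  proof (intro sum_nonneg)
    fix k assume k: "k \<in> {1..d}"
    have "0 < Mp" unfolding Mp_def using M by (intro prod_pos) auto
    moreover have "0 < beta \<alpha> k" using \<alpha> k by (simp add: beta_def)
    ultimately have "0 \<le> Bk k" using L R by (simp add: Bk_def)
    then show "0 \<le> Bk k * sqrt 2 * sqrt (Ik k) / sqrt (real n)" using Ik0[OF k] by simp
  qed
  have spPW: "fst p \<in> space Sn" "snd p \<in> space W" if "p \<in> space P" for p
    using that by (auto simp: spP space_pair_measure)
  have spSn: "s i \<in> space \<mu>" if "s \<in> space Sn" "i < n" for s i
    using that unfolding Sn_def space_PiM by (auto intro: PiE_mem)
  show ?thesis
  proof (cases "integrable \<mu> (ell w0)")
    case False
    have nint: "\<not> integrable \<mu> (ell w)" if w: "w \<in> space W" for w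
    proof
      assume iw: "integrable \<mu> (ell w)"
      have "integrable \<mu> (\<lambda>z. ell w z - (\<Sum>k\<in>{1..d}. \<Delta> k (restrict w {1..k}) z))"
        using iw \<Delta>int rW[OF w] by (intro Bochner_Integration.integrable_diff Bochner_Integration.integrable_sum) auto
      moreover have "integrable \<mu> (\<lambda>z. ell w z - (\<Sum>k\<in>{1..d}. \<Delta> k (restrict w {1..k}) z)) = integrable \<mu> (ell w0)"
        by (rule Bochner_Integration.integrable_cong) (simp_all add: decomp[OF w])
      ultimately show False using False by simp
    qed
    have "(\<integral>p. L\<mu> (snd p) - LS (fst p) (snd p) \<partial>P) = (\<integral>p. - LS (fst p) (snd p) \<partial>P)"
      by (rule Bochner_Integration.integral_cong) (simp_all add: L\<mu>_def nint spPW not_integrable_integral_eq)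
    also have "\<dots> = - (\<integral>p. LS (fst p) (snd p) \<partial>P)" by (rule integral_minus)
    also have "\<dots> \<le> 0"
    proof -
      have "0 \<le> (\<integral>p. LS (fst p) (snd p) \<partial>P)"
      proof (rule integral_nonneg_AE, rule AE_I2)
        fix p assume p: "p \<in> space P"
        have "0 \<le> (\<Sum>i<n. ell (snd p) (fst p i))"
          using ell_nonneg spPW[OF p] spSn[OF spPW(1)[OF p]] sp\<mu> by (intro sum_nonneg) auto
        then show "0 \<le> LS (fst p) (snd p)" by (simp add: LS_def)
      qed
      then show ?thesis by simp
    qed
    also have "\<dots> \<le> (\<Sum>k\<in>{1..d}. Bk k * sqrt 2 * sqrt (Ik k) / sqrt (real n))" by (rule rhs0)
    finally show ?thesis unfolding rhs .
  next
    case True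
    note int0 = True
    have npos: "0 < n" using n by simp
    define T0 where "T0 = (\<lambda>s. L\<mu> w0 - (1 / real n) * (\<Sum>i<n. ell w0 (s i)))"
    define G where "G = (\<lambda>k p. fk k (fst p) (restrict (snd p) {1..k}))"
    have pw: "L\<mu> (snd p) - LS (fst p) (snd p) = T0 (fst p) + (\<Sum>k\<in>{1..d}. G k p)" if p: "p \<in> space P" for p
    proof -
      define w where "w = snd p"
      define s where "s = fst p"
      have w: "w \<in> space W" and s: "s \<in> space Sn" using spPW[OF p] by (simp_all add: w_def s_def)
      define u where "u = (\<lambda>k. restrict w {1..k})"
      have uW: "u k \<in> space (Wspace \<delta> M \<alpha> k)" if "k \<in> {1..d}" for k using rW[OF w] that by (simp add: u_def)
      define C where "C = (\<lambda>k. \<integral>z. \<Delta> k (u k) z \<partial>\<mu>)"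
      define D where "D = (\<lambda>k i. \<Delta> k (u k) (s i))"
      have L1: "L\<mu> w = L\<mu> w0 + (\<Sum>k\<in>{1..d}. C k)"
      proof -
        have "L\<mu> w = (\<integral>z. ell w0 z + (\<Sum>k\<in>{1..d}. \<Delta> k (u k) z) \<partial>\<mu>)"
          unfolding L\<mu>_def u_def by (rule Bochner_Integration.integral_cong) (simp_all only: decomp[OF w])
        also have "\<dots> = L\<mu> w0 + (\<integral>z. (\<Sum>k\<in>{1..d}. \<Delta> k (u k) z) \<partial>\<mu>)"
          unfolding L\<mu>_def using int0 \<Delta>int uW
          by (intro Bochner_Integration.integral_add Bochner_Integration.integrable_sum) auto
        also have "(\<integral>z. (\<Sum>k\<in>{1..d}. \<Delta> k (u k) z) \<partial>\<mu>) = (\<Sum>k\<in>{1..d}. C k)"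
          unfolding C_def using \<Delta>int uW by (intro Bochner_Integration.integral_sum) auto
        finally show ?thesis .
      qed
      have "(\<Sum>i<n. ell w (s i)) = (\<Sum>i<n. ell w0 (s i) + (\<Sum>k\<in>{1..d}. D k i))"
        by (intro sum.cong refl) (simp only: decomp[OF w] u_def D_def)
      also have "\<dots> = (\<Sum>i<n. ell w0 (s i)) + (\<Sum>i<n. \<Sum>k\<in>{1..d}. D k i)" by (rule sum.distrib)
      also have "(\<Sum>i<n. \<Sum>k\<in>{1..d}. D k i) = (\<Sum>k\<in>{1..d}. \<Sum>i<n. D k i)" by (rule sum.swap)
      finally have L2: "(\<Sum>i<n. ell w (s i)) = (\<Sum>i<n. ell w0 (s i)) + (\<Sum>k\<in>{1..d}. \<Sum>i<n. D k i)" .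
      have L3: "G k p = C k - (1 / real n) * (\<Sum>i<n. D k i)" for k
      proof -
        have "G k p = (1 / real n) * (\<Sum>i<n. C k - D k i)"
          by (simp add: G_def fk_def C_def D_def u_def w_def s_def)
        also have "\<dots> = (1 / real n) * (real n * C k - (\<Sum>i<n. D k i))" by (simp add: sum_subtractf)
        also have "\<dots> = C k - (1 / real n) * (\<Sum>i<n. D k i)" using npos by (simp add: field_simps)
        finally show ?thesis .
      qed
      have L4: "(\<Sum>k\<in>{1..d}. G k p) = (\<Sum>k\<in>{1..d}. C k) - (1 / real n) * (\<Sum>k\<in>{1..d}. \<Sum>i<n. D k i)"
        by (simp only: L3 sum_subtractf sum_distrib_left)
      show ?thesis
        unfolding LS_def T0_def L4 w_def[symmetric] s_def[symmetric] L1 L2 by (simp add: algebra_simps)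
    qed
    have fstm: "fst \<in> measurable P Sn" unfolding mP by (rule measurable_fst)
    have ell0m: "ell w0 \<in> borel_measurable \<mu>" by (rule ellw[OF w0W])
    have compm: "(\<lambda>s. s i) \<in> measurable Sn \<mu>" if "i < n" for i
      unfolding Sn_def using that by (intro measurable_component_singleton) auto
    have distc: "distr Sn \<mu> (\<lambda>s. s i) = \<mu>" if "i < n" for i
      unfolding Sn_def using that by (intro distr_PiM_component) (auto simp: \<mu>.prob_space_axioms)
    have compint: "integrable Sn (\<lambda>s. ell w0 (s i))" if "i < n" for i
      using integrable_distr_eq[OF compm[OF that] ell0m] int0 distc[OF that] by simp
    have compeq: "(\<integral>s. ell w0 (s i) \<partial>Sn) = L\<mu> w0" if "i < n" for i
      using integral_distr[OF compm[OF that] ell0m] distc[OF that] by (simp add: L\<mu>_def)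
    have T0m: "T0 \<in> borel_measurable Sn" unfolding T0_def
      using compm ell0m by (intro borel_measurable_diff borel_measurable_const borel_measurable_times borel_measurable_sum)
         (auto intro: measurable_compose)
    have T0int: "integrable Sn T0" unfolding T0_def
      by (intro Bochner_Integration.integrable_diff Bochner_Integration.integrable_mult_right
          Bochner_Integration.integrable_sum compint Sn.integrable_const) auto
    have T0zero: "integral\<^sup>L Sn T0 = 0"
    proof -
      have i1: "integrable Sn (\<lambda>s. (1 / real n) * (\<Sum>i<n. ell w0 (s i)))"
        by (intro Bochner_Integration.integrable_mult_right Bochner_Integration.integrable_sum compint) auto
      have "integral\<^sup>L Sn T0 = (\<integral>s. L\<mu> w0 \<partial>Sn) - (\<integral>s. (1 / real n) * (\<Sum>i<n. ell w0 (s i)) \<partial>Sn)"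
        unfolding T0_def by (rule Bochner_Integration.integral_diff[OF Sn.integrable_const i1])
      also have "(\<integral>s. L\<mu> w0 \<partial>Sn) = L\<mu> w0" by (simp add: Sn.prob_space)
      also have "(\<integral>s. (1 / real n) * (\<Sum>i<n. ell w0 (s i)) \<partial>Sn) = (1 / real n) * (\<integral>s. (\<Sum>i<n. ell w0 (s i)) \<partial>Sn)"
        by (rule integral_mult_right_zero)
      also have "(\<integral>s. (\<Sum>i<n. ell w0 (s i)) \<partial>Sn) = (\<Sum>i<n. \<integral>s. ell w0 (s i) \<partial>Sn)"
        by (rule Bochner_Integration.integral_sum) (use compint in auto)
      finally have "integral\<^sup>L Sn T0 = L\<mu> w0 - (1 / real n) * (\<Sum>i<n. \<integral>s. ell w0 (s i) \<partial>Sn)" .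
      also have "(\<Sum>i<n. \<integral>s. ell w0 (s i) \<partial>Sn) = (\<Sum>i<n. L\<mu> w0)" by (rule sum.cong) (simp_all add: compeq)
      finally show ?thesis using npos by simp
    qed
    have T0P: "integrable P (\<lambda>p. T0 (fst p))" using integrable_distr_eq[OF fstm T0m] T0int margP by simp
    have T0P0: "(\<integral>p. T0 (fst p) \<partial>P) = 0" using integral_distr[OF fstm T0m] T0zero margP by simp
    have Gint: "integrable P (G k)" if "k \<in> {1..d}" for k using perk[OF that] by (simp add: G_def)
    have "(\<integral>p. L\<mu> (snd p) - LS (fst p) (snd p) \<partial>P) = (\<integral>p. T0 (fst p) + (\<Sum>k\<in>{1..d}. G k p) \<partial>P)"
      by (rule Bochner_Integration.integral_cong) (simp_all add: pw)
    also have "\<dots> = (\<integral>p. T0 (fst p) \<partial>P) + (\<integral>p. (\<Sum>k\<in>{1..d}. G k p) \<partial>P)"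
      using T0P Gint by (intro Bochner_Integration.integral_add Bochner_Integration.integrable_sum) auto
    also have "(\<integral>p. (\<Sum>k\<in>{1..d}. G k p) \<partial>P) = (\<Sum>k\<in>{1..d}. integral\<^sup>L P (G k))"
      using Gint by (intro Bochner_Integration.integral_sum) auto
    also have "\<dots> \<le> (\<Sum>k\<in>{1..d}. Bk k * sqrt 2 * sqrt (Ik k) / sqrt (real n))"
      by (intro sum_mono) (use perk in \<open>simp add: G_def\<close>)
    finally show ?thesis using T0P0 unfolding rhs by simp
  qed
qed

end
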